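(* Let $\theta$ be a non-constant inner function and let $\varphi=\varphi_1+\overline{\varphi_2}$, where $\varphi_1,\varphi_2\in K_\theta$. Then for every $u\in K_\theta\cap H^\infty$, \[ \|A^{\theta}_{\varphi}u\|^2-\|(A^{\theta}_{\varphi})^*u\|^2 =\|P^{\perp}(\bar{\theta}\varphi_1 u)\|^2-\|P(\overline{\varphi_1}u)\|^2-\Big(\|P^{\perp}(\bar{\theta}\varphi_2 u)\|^2-\|P(\overline{\varphi_2}u)\|^2\Big). \]
   Context: $\mathbb{D}$ is the open unit disk, $L^2$ the Lebesgue space of square-integrable functions on the unit circle $\mathbb{T}=\partial\mathbb{D}$ (normalized arc length), $H^2\subset L^2$ the Hardy space (functions with vanishing negative Fourier coefficients), $H^\infty$ the bounded analytic functions. $P$ and $P^\perp$ are the orthogonal projections of $L^2$ onto $H^2$ and onto $[H^2]^\perp=L^2\ominus H^2$. An inner function is an analytic $\theta$ with $|\theta|=1$ a.e. on $\mathbb{T}$. The model space is $K_\theta=H^2\ominus\theta H^2$, and $P_\theta f=Pf-\theta P(\bar\theta f)$ is the orthogonal projection of $L^2$ onto $K_\theta$. For $\varphi\in L^2$, the truncated Toeplitz operator is $A^\theta_\varphi f=P_\theta(\varphi f)$, defined on the dense subspace $K_\theta\cap H^\infty$ of $K_\theta$; its adjoint $(A^\theta_\varphi)^*$ acts on $K_\theta\cap H^\infty$ as $A^\theta_{\bar\varphi}$. All norms are $L^2$ norms. *)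

theory Defs
  imports "HOL-Analysis.Analysis"
begin

text \<open>Functions on the unit circle T are represented by their values at e^(i t),
  t in [0, 2 pi], i.e. as functions real => complex on [0, 2 pi];
  normalized arc length is (1/(2 pi)) times Lebesgue measure on [0, 2 pi].\<close>

definition circ :: "real set" where "circ = {0..2*pi}"

definition L2 :: "(real \<Rightarrow> complex) \<Rightarrow> bool" where
  "L2 f \<longleftrightarrow> f \<in> borel_measurable (lebesgue_on circ) \<and>
     integrable (lebesgue_on circ) (\<lambda>t. (cmod (f t))^2)"

definition l2inner :: "(real \<Rightarrow> complex) \<Rightarrow> (real \<Rightarrow> complex) \<Rightarrow> complex" where
  "l2inner f g = complex_of_real (1 / (2*pi)) *
     integral\<^sup>L (lebesgue_on circ) (\<lambda>t. f t * cnj (g t))"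

definition l2norm :: "(real \<Rightarrow> complex) \<Rightarrow> real" where
  "l2norm f = sqrt ((1 / (2*pi)) * integral\<^sup>L (lebesgue_on circ) (\<lambda>t. (cmod (f t))^2))"

definition fourier_coeff :: "(real \<Rightarrow> complex) \<Rightarrow> int \<Rightarrow> complex" where
  "fourier_coeff f n = complex_of_real (1 / (2*pi)) *
     integral\<^sup>L (lebesgue_on circ) (\<lambda>t. f t * exp (- \<i> * of_int n * complex_of_real t))"

definition H2 :: "(real \<Rightarrow> complex) \<Rightarrow> bool" where
  "H2 f \<longleftrightarrow> L2 f \<and> (\<forall>n::int. n < 0 \<longrightarrow> fourier_coeff f n = 0)"

definition Hinf :: "(real \<Rightarrow> complex) \<Rightarrow> bool" where
  "Hinf f \<longleftrightarrow> H2 f \<and> (\<exists>C. AE t in lebesgue_on circ. cmod (f t) \<le> C)"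

definition inner_fun :: "(real \<Rightarrow> complex) \<Rightarrow> bool" where
  "inner_fun \<theta> \<longleftrightarrow> Hinf \<theta> \<and> (AE t in lebesgue_on circ. cmod (\<theta> t) = 1)"

definition nonconstant :: "(real \<Rightarrow> complex) \<Rightarrow> bool" where
  "nonconstant f \<longleftrightarrow> \<not> (\<exists>c. AE t in lebesgue_on circ. f t = c)"

text \<open>Orthogonal projection P of L^2 onto H^2 (unique up to a.e. equality, which
  does not affect norms).\<close>
definition Pproj :: "(real \<Rightarrow> complex) \<Rightarrow> (real \<Rightarrow> complex)" where
  "Pproj f = (SOME h. H2 h \<and> (\<forall>g. H2 g \<longrightarrow> l2inner (\<lambda>t. f t - h t) g = 0))"

definition Pperp :: "(real \<Rightarrow> complex) \<Rightarrow> (real \<Rightarrow> complex)" where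
  "Pperp f = (\<lambda>t. f t - Pproj f t)"

definition Kspace :: "(real \<Rightarrow> complex) \<Rightarrow> (real \<Rightarrow> complex) \<Rightarrow> bool" where
  "Kspace \<theta> f \<longleftrightarrow> H2 f \<and> (\<forall>g. H2 g \<longrightarrow> l2inner f (\<lambda>t. \<theta> t * g t) = 0)"

definition Ptheta :: "(real \<Rightarrow> complex) \<Rightarrow> (real \<Rightarrow> complex) \<Rightarrow> (real \<Rightarrow> complex)" where
  "Ptheta \<theta> f = (\<lambda>t. Pproj f t - \<theta> t * Pproj (\<lambda>s. cnj (\<theta> s) * f s) t)"

definition TTO :: "(real \<Rightarrow> complex) \<Rightarrow> (real \<Rightarrow> complex) \<Rightarrow> (real \<Rightarrow> complex) \<Rightarrow> (real \<Rightarrow> complex)" where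
  "TTO \<theta> \<phi> u = Ptheta \<theta> (\<lambda>t. \<phi> t * u t)"

end

theory Submission
  imports Defs
begin


abbreviation Mc where "Mc \<equiv> lebesgue_on circ"

definition ip :: "(real \<Rightarrow> complex) \<Rightarrow> (real \<Rightarrow> complex) \<Rightarrow> complex" where
  "ip f g = (LINT t|Mc. f t * cnj (g t))"

definition nn :: "(real \<Rightarrow> complex) \<Rightarrow> real" where
  "nn f = (LINT t|Mc. (cmod (f t))^2)"

lemma sq_sum_le: "((x::real)+y)^2 \<le> 2*x^2 + 2*y^2"
proof -
  have "0 \<le> (x-y)^2" by simp
  thus ?thesis by (simp add: power2_eq_square algebra_simps)
qed

lemma prod_le_sq: "0 \<le> (x::real) \<Longrightarrow> 0 \<le> y \<Longrightarrow> x*y \<le> x^2 + y^2"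
proof -
  assume "0 \<le> x" "0 \<le> y"
  hence "0 \<le> x*y" by simp
  moreover have "0 \<le> (x-y)^2" by simp
  hence "2*(x*y) \<le> x^2 + y^2" by (simp add: power2_eq_square algebra_simps)
  ultimately show ?thesis by linarith
qed

lemma borel_measurable_cnj[measurable]:
  "f \<in> borel_measurable M \<Longrightarrow> (\<lambda>x. cnj (f x)) \<in> borel_measurable M"
  by (rule borel_measurable_continuous_on[where f=cnj]) (auto intro: continuous_intros)

lemma circ_sets[simp]: "circ \<in> sets lebesgue"
  unfolding circ_def by simp

lemma space_Mc[simp]: "space Mc = circ"
  by simp

lemma emeasure_Mc: "emeasure Mc circ = ennreal (2*pi)"
  unfolding circ_def
  by (simp add: emeasure_restrict_space)

lemma finite_Mc: "finite_measure Mc"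
  by (rule finite_measureI) (simp add: emeasure_Mc)

interpretation Mc: finite_measure Mc by (rule finite_Mc)

lemma measure_Mc: "measure Mc circ = 2*pi"
  by (simp add: measure_def emeasure_Mc)

lemma L2_meas[measurable]: "L2 f \<Longrightarrow> f \<in> borel_measurable Mc"
  unfolding L2_def by simp

lemma L2_int: "L2 f \<Longrightarrow> integrable Mc (\<lambda>t. (cmod (f t))^2)"
  unfolding L2_def by simp

lemma L2_bounded:
  assumes [measurable]: "f \<in> borel_measurable Mc" and b: "AE t in Mc. cmod (f t) \<le> C"
  shows "L2 f"
  unfolding L2_def
proof safe
  show "integrable Mc (\<lambda>t. (cmod (f t))\<^sup>2)"
  proof (rule Bochner_Integration.integrable_bound[where f="\<lambda>t. C^2"])
    show "integrable Mc (\<lambda>t. C^2)" by simp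
    show "AE t in Mc. norm ((cmod (f t))\<^sup>2) \<le> norm (C^2)"
      using b by eventually_elim (auto intro!: power_mono)
  qed simp
qed simp

lemma L2_add: "L2 f \<Longrightarrow> L2 g \<Longrightarrow> L2 (\<lambda>t. f t + g t)"
  unfolding L2_def
proof safe
  assume [measurable]: "f \<in> borel_measurable Mc" "g \<in> borel_measurable Mc"
    and i: "integrable Mc (\<lambda>t. (cmod (f t))\<^sup>2)" "integrable Mc (\<lambda>t. (cmod (g t))\<^sup>2)"
  show "(\<lambda>t. f t + g t) \<in> borel_measurable Mc" by simp
  show "integrable Mc (\<lambda>t. (cmod (f t + g t))\<^sup>2)"
  proof (rule Bochner_Integration.integrable_bound[where f="\<lambda>t. 2 * (cmod (f t))^2 + 2 * (cmod (g t))^2"])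
    show "integrable Mc (\<lambda>t. 2 * (cmod (f t))^2 + 2 * (cmod (g t))^2)" using i by simp
    show "AE t in Mc. norm ((cmod (f t + g t))\<^sup>2) \<le> norm (2 * (cmod (f t))^2 + 2 * (cmod (g t))^2)"
    proof (intro AE_I2)
      fix t
      have "cmod (f t + g t) \<le> cmod (f t) + cmod (g t)" by (rule norm_triangle_ineq)
      hence "(cmod (f t + g t))^2 \<le> (cmod (f t) + cmod (g t))^2" by (simp add: power_mono)
      also have "\<dots> \<le> 2 * (cmod (f t))^2 + 2 * (cmod (g t))^2"
        by (rule sq_sum_le)
      finally show "norm ((cmod (f t + g t))\<^sup>2) \<le> norm (2 * (cmod (f t))^2 + 2 * (cmod (g t))^2)" by simp
    qed
  qed simp
qed

lemma L2_mult_bounded: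
  assumes "L2 f" and [measurable]: "b \<in> borel_measurable Mc" and bb: "AE t in Mc. cmod (b t) \<le> C"
  shows "L2 (\<lambda>t. b t * f t)"
  unfolding L2_def
proof safe
  note [measurable] = L2_meas[OF assms(1)]
  show "(\<lambda>t. b t * f t) \<in> borel_measurable Mc" by simp
  show "integrable Mc (\<lambda>t. (cmod (b t * f t))\<^sup>2)"
  proof (rule Bochner_Integration.integrable_bound[where f="\<lambda>t. C^2 * (cmod (f t))^2"])
    show "integrable Mc (\<lambda>t. C^2 * (cmod (f t))^2)" using L2_int[OF assms(1)] by simp
    show "AE t in Mc. norm ((cmod (b t * f t))\<^sup>2) \<le> norm (C^2 * (cmod (f t))^2)"
      using bb
    proof eventually_elim
      case (elim t)
      have "cmod (b t * f t) \<le> C * cmod (f t)"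
        by (simp add: norm_mult elim mult_right_mono)
      hence "(cmod (b t * f t))^2 \<le> (C * cmod (f t))^2" by (simp add: power_mono)
      thus ?case by (simp add: power_mult_distrib)
    qed
  qed simp
qed

lemma L2_cmult: "L2 f \<Longrightarrow> L2 (\<lambda>t. c * f t)"
  using L2_mult_bounded[of f "\<lambda>t. c" "cmod c"] by simp

lemma L2_uminus: "L2 f \<Longrightarrow> L2 (\<lambda>t. - f t)"
  using L2_cmult[of f "-1"] by simp

lemma L2_diff: "L2 f \<Longrightarrow> L2 g \<Longrightarrow> L2 (\<lambda>t. f t - g t)"
  using L2_add[of f "\<lambda>t. - g t"] L2_uminus[of g] by simp

lemma L2_cnj: "L2 f \<Longrightarrow> L2 (\<lambda>t. cnj (f t))"
  unfolding L2_def by (auto intro: borel_measurable_cnj)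

lemma L2_zero: "L2 (\<lambda>t. 0)"
  by (rule L2_bounded[of _ 0]) auto

lemma L2_sum: "finite A \<Longrightarrow> (\<And>i. i \<in> A \<Longrightarrow> L2 (f i)) \<Longrightarrow> L2 (\<lambda>t. \<Sum>i\<in>A. f i t)"
  by (induction A rule: finite_induct) (auto intro: L2_add L2_zero)

lemma integrable_ip:
  assumes "L2 f" "L2 g"
  shows "integrable Mc (\<lambda>t. f t * cnj (g t))"
proof (rule Bochner_Integration.integrable_bound[where f="\<lambda>t. (cmod (f t))^2 + (cmod (g t))^2"])
  note [measurable] = L2_meas[OF assms(1)] L2_meas[OF assms(2)]
  show "integrable Mc (\<lambda>t. (cmod (f t))^2 + (cmod (g t))^2)"
    using L2_int[OF assms(1)] L2_int[OF assms(2)] by simp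
  show "(\<lambda>t. f t * cnj (g t)) \<in> borel_measurable Mc" by simp
  show "AE t in Mc. norm (f t * cnj (g t)) \<le> norm ((cmod (f t))^2 + (cmod (g t))^2)"
  proof (intro AE_I2)
    fix t
    have "cmod (f t) * cmod (g t) \<le> (cmod (f t))^2 + (cmod (g t))^2"
      by (rule prod_le_sq) simp_all
    thus "norm (f t * cnj (g t)) \<le> norm ((cmod (f t))^2 + (cmod (g t))^2)"
      by (simp add: norm_mult)
  qed
qed

lemma ip_add_left: "L2 f \<Longrightarrow> L2 g \<Longrightarrow> L2 h \<Longrightarrow> ip (\<lambda>t. f t + g t) h = ip f h + ip g h"
  unfolding ip_def by (simp add: distrib_right integrable_ip)

lemma ip_diff_left: "L2 f \<Longrightarrow> L2 g \<Longrightarrow> L2 h \<Longrightarrow> ip (\<lambda>t. f t - g t) h = ip f h - ip g h"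
  unfolding ip_def by (simp add: left_diff_distrib integrable_ip)

lemma ip_cmult_left: "ip (\<lambda>t. c * f t) h = c * ip f h"
  unfolding ip_def by (simp add: mult.assoc)

lemma ip_swap: "ip g f = cnj (ip f g)"
proof -
  have "ip g f = (LINT t|Mc. cnj (f t * cnj (g t)))" unfolding ip_def by (simp add: mult.commute)
  also have "\<dots> = cnj (ip f g)" unfolding ip_def by (rule Bochner_Integration.integral_cnj)
  finally show ?thesis .
qed

lemma ip_add_right: "L2 f \<Longrightarrow> L2 g \<Longrightarrow> L2 h \<Longrightarrow> ip h (\<lambda>t. f t + g t) = ip h f + ip h g"
  by (metis (no_types) complex_cnj_add ip_add_left ip_swap)

lemma ip_diff_right: "L2 f \<Longrightarrow> L2 g \<Longrightarrow> L2 h \<Longrightarrow> ip h (\<lambda>t. f t - g t) = ip h f - ip h g"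
  by (metis (no_types) complex_cnj_diff ip_diff_left ip_swap)

lemma ip_cmult_right: "ip h (\<lambda>t. c * f t) = cnj c * ip h f"
  by (metis complex_cnj_cnj complex_cnj_mult ip_cmult_left ip_swap)

lemma nn_ip: "complex_of_real (nn f) = ip f f"
proof -
  have "(\<lambda>t. f t * cnj (f t)) = (\<lambda>t. complex_of_real ((cmod (f t))^2))"
    by (rule ext) (simp only: complex_norm_square)
  thus ?thesis unfolding ip_def nn_def by (simp only: integral_complex_of_real)
qed

lemma nn_Re_ip: "nn f = Re (ip f f)"
  using nn_ip[of f] by (metis Re_complex_of_real)

lemma nn_nonneg: "0 \<le> nn f"
  unfolding nn_def by (rule integral_nonneg_AE) simp

lemma nn_add: "L2 f \<Longrightarrow> L2 g \<Longrightarrow> nn (\<lambda>t. f t + g t) = nn f + nn g + 2 * Re (ip f g)"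
proof -
  assume a: "L2 f" "L2 g"
  have "ip (\<lambda>t. f t + g t) (\<lambda>t. f t + g t) = ip f f + ip g g + (ip f g + cnj (ip f g))"
    using a by (simp add: ip_add_left ip_add_right L2_add ip_swap[of g f])
  hence "Re (ip (\<lambda>t. f t + g t) (\<lambda>t. f t + g t)) = Re (ip f f) + Re (ip g g) + 2 * Re (ip f g)"
    by simp
  thus ?thesis by (simp add: nn_Re_ip)
qed

lemma nn_diff: "L2 f \<Longrightarrow> L2 g \<Longrightarrow> nn (\<lambda>t. f t - g t) = nn f + nn g - 2 * Re (ip f g)"
proof -
  assume a: "L2 f" "L2 g"
  have "nn (\<lambda>t. - g t) = nn g" unfolding nn_def by simp
  moreover have "ip f (\<lambda>t. - g t) = - ip f g"
    using ip_cmult_right[of f "-1" g] by simp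
  ultimately show ?thesis
    using nn_add[OF a(1) L2_uminus[OF a(2)]] by simp
qed

lemma nn_cmult: "nn (\<lambda>t. c * f t) = (cmod c)^2 * nn f"
  unfolding nn_def by (simp add: norm_mult power_mult_distrib)

lemma CS_ip:
  assumes "L2 f" "L2 g"
  shows "(cmod (ip f g))^2 \<le> nn f * nn g"
proof -
  define z where "z = ip f g"
  define w where "w = (if z = 0 then 1 else z / cmod z)"
  have w1: "cmod w = 1" by (simp add: w_def norm_divide)
  have wz: "cnj w * z = cmod z"
  proof (cases "z = 0")
    case False
    have "cnj w * z = (z * cnj z) / of_real (cmod z)" using False by (simp add: w_def)
    also have "\<dots> = of_real ((cmod z)^2) / of_real (cmod z)" by (simp only: complex_norm_square)
    also have "\<dots> = of_real (cmod z)" using False by (simp add: power2_eq_square)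
    finally show ?thesis .
  qed (simp add: w_def)
  have key: "0 \<le> nn f + s^2 * nn g - 2 * s * cmod z" for s :: real
  proof -
    have "L2 (\<lambda>t. (of_real s * w) * g t)" using assms by (intro L2_cmult)
    hence "0 \<le> nn (\<lambda>t. f t - (of_real s * w) * g t)" by (simp add: nn_nonneg)
    also have "\<dots> = nn f + nn (\<lambda>t. (of_real s * w) * g t) - 2 * Re (ip f (\<lambda>t. (of_real s * w) * g t))"
      using assms by (intro nn_diff L2_cmult)
    also have "nn (\<lambda>t. (of_real s * w) * g t) = s^2 * nn g"
      by (simp add: nn_cmult norm_mult w1)
    also have "ip f (\<lambda>t. (of_real s * w) * g t) = of_real s * (cnj w * z)"
      by (simp add: ip_cmult_right z_def)
    also have "Re (of_real s * (cnj w * z)) = s * cmod z" using wz by simp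
    finally show ?thesis by simp
  qed
  show ?thesis
  proof (cases "nn g = 0")
    case True
    have "cmod z = 0"
    proof (rule ccontr)
      assume "cmod z \<noteq> 0"
      hence "cmod z > 0" by simp
      have "0 \<le> nn f - 2 * ((nn f + 1) / (2 * cmod z)) * cmod z"
        using key[of "(nn f + 1) / (2 * cmod z)"] True by simp
      also have "\<dots> = -1" using \<open>cmod z > 0\<close> by (simp add: field_simps)
      finally show False by simp
    qed
    thus ?thesis using True by (simp add: z_def)
  next
    case False
    hence g: "nn g > 0" using nn_nonneg[of g] by simp
    have "0 \<le> nn f + (cmod z / nn g)^2 * nn g - 2 * (cmod z / nn g) * cmod z" by (rule key)
    also have "\<dots> = nn f - (cmod z)^2 / nn g" using g by (simp add: field_simps power2_eq_square)
    finally have "(cmod z)^2 / nn g \<le> nn f" by simp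
    thus ?thesis using g by (simp add: z_def divide_le_eq mult.commute)
  qed
qed

lemma CS_ip': "L2 f \<Longrightarrow> L2 g \<Longrightarrow> cmod (ip f g) \<le> sqrt (nn f) * sqrt (nn g)"
  by (metis CS_ip norm_ge_zero real_sqrt_le_iff real_sqrt_mult real_sqrt_unique)

lemma nn_triangle:
  assumes "L2 f" "L2 g"
  shows "sqrt (nn (\<lambda>t. f t + g t)) \<le> sqrt (nn f) + sqrt (nn g)"
proof -
  have "nn (\<lambda>t. f t + g t) = nn f + nn g + 2 * Re (ip f g)" using assms by (rule nn_add)
  also have "\<dots> \<le> nn f + nn g + 2 * (sqrt (nn f) * sqrt (nn g))"
    using CS_ip'[OF assms] complex_Re_le_cmod[of "ip f g"] by linarith
  also have "\<dots> = (sqrt (nn f) + sqrt (nn g))^2"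
    using nn_nonneg[of f] nn_nonneg[of g] by (simp add: power2_eq_square algebra_simps)
  finally show ?thesis
    by (simp add: nn_nonneg real_le_lsqrt)
qed

lemma nn_zero_AE:
  assumes "L2 f" "nn f = 0" shows "AE t in Mc. f t = 0"
proof -
  have "AE t in Mc. (cmod (f t))^2 = 0"
    using assms integral_nonneg_eq_0_iff_AE[where f="\<lambda>t. (cmod (f t))^2" and M=Mc]
    unfolding nn_def L2_def by simp
  thus ?thesis by simp
qed

lemma l2norm_sq: "(l2norm f)^2 = nn f / (2*pi)"
  unfolding l2norm_def nn_def
  by (simp add: integral_nonneg_AE)

lemma l2inner_ip: "l2inner f g = complex_of_real (1/(2*pi)) * ip f g"
  unfolding l2inner_def ip_def by simp



definition ex :: "int \<Rightarrow> real \<Rightarrow> complex" where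
  "ex k t = exp (\<i> * of_int k * of_real t)"

lemma cont_meas: "continuous_on UNIV f \<Longrightarrow> f \<in> borel_measurable Mc"
  by (rule continuous_imp_measurable_on_sets_lebesgue) (auto intro: continuous_on_subset)

lemma ex_cont: "continuous_on S (ex k)"
  unfolding ex_def by (intro continuous_intros)

lemma ex_meas[measurable]: "ex k \<in> borel_measurable Mc"
  by (rule cont_meas, rule ex_cont)

lemma norm_ex[simp]: "cmod (ex k t) = 1"
  unfolding ex_def by (simp add: norm_exp_eq_Re)

lemma ex_mult: "ex j t * ex k t = ex (j + k) t"
  unfolding ex_def by (simp add: exp_add[symmetric] algebra_simps)

lemma cnj_ex: "cnj (ex k t) = ex (-k) t"
  unfolding ex_def by (simp add: exp_cnj)

lemma ex_zero[simp]: "ex 0 t = 1"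
  unfolding ex_def by simp

lemma L2_ex: "L2 (ex k)"
  by (rule L2_bounded[of _ 1]) auto

lemma integrable_ex: "integrable Mc (ex k)"
  by (rule Bochner_Integration.integrable_bound[where f="\<lambda>t. 1::real"]) auto

lemma int_ex: "(LINT t|Mc. ex k t) = (if k = 0 then of_real (2*pi) else 0)"
proof (cases "k = 0")
  case True
  thus ?thesis by (simp add: measure_Mc scaleR_conv_of_real)
next
  case False
  have "(LINT t|Mc. ex k t) = integral circ (ex k)"
    by (rule lebesgue_integral_eq_integral[OF integrable_ex circ_sets])
  also have "integral circ (ex k) = 0"
  proof -
    define F where "F t = ex k t / (\<i> * of_int k)" for t
    have d: "(F has_vector_derivative ex k t) (at t within {0..2*pi})" for t
    proof -
      have "((\<lambda>z. exp (\<i> * of_int k * z) / (\<i> * of_int k)) has_field_derivative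
              exp (\<i> * of_int k * of_real t)) (at (of_real t))"
        using False by (auto intro!: derivative_eq_intros)
      from has_vector_derivative_real_field[OF this]
      show ?thesis unfolding F_def ex_def by simp
    qed
    have "(ex k has_integral F (2*pi) - F 0) {0..2*pi}"
      by (rule fundamental_theorem_of_calculus) (auto intro: d)
    moreover have "F (2*pi) - F 0 = 0"
    proof -
      have "ex k (2*pi) = 1" unfolding ex_def
        using exp_2pi_1_int[of k] by (simp add: algebra_simps)
      thus ?thesis by (simp add: F_def ex_def)
    qed
    ultimately show ?thesis unfolding circ_def by (simp add: integral_unique)
  qed
  finally show ?thesis using False by simp
qed

lemma ip_ex: "ip (ex j) (ex k) = (if j = k then of_real (2*pi) else 0)"
proof -
  have "ip (ex j) (ex k) = (LINT t|Mc. ex (j - k) t)"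
    unfolding ip_def by (simp add: cnj_ex ex_mult)
  thus ?thesis by (simp add: int_ex)
qed

lemma fourier_coeff_ip: "fourier_coeff f n = ip f (ex n) / (2*pi)"
proof -
  have "(\<lambda>t. f t * exp (- \<i> * of_int n * complex_of_real t)) = (\<lambda>t. f t * cnj (ex n t))"
    by (simp add: ex_def exp_cnj)
  thus ?thesis unfolding fourier_coeff_def ip_def by simp
qed

lemma ip_sum_left:
  assumes "finite A" "\<And>i. i \<in> A \<Longrightarrow> L2 (g i)" "L2 h"
  shows "ip (\<lambda>t. \<Sum>i\<in>A. g i t) h = (\<Sum>i\<in>A. ip (g i) h)"
  using assms
proof (induction A rule: finite_induct)
  case empty
  thus ?case by (simp add: ip_def)
next
  case (insert x F)
  have "ip (\<lambda>t. \<Sum>i\<in>insert x F. g i t) h = ip (\<lambda>t. g x t + (\<Sum>i\<in>F. g i t)) h"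
    using insert by simp
  also have "\<dots> = ip (g x) h + ip (\<lambda>t. \<Sum>i\<in>F. g i t) h"
    using insert by (intro ip_add_left L2_sum) auto
  finally show ?case using insert by simp
qed

lemma ip_sum_right:
  assumes "finite A" "\<And>i. i \<in> A \<Longrightarrow> L2 (g i)" "L2 h"
  shows "ip h (\<lambda>t. \<Sum>i\<in>A. g i t) = (\<Sum>i\<in>A. ip h (g i))"
proof -
  have "ip h (\<lambda>t. \<Sum>i\<in>A. g i t) = cnj (ip (\<lambda>t. \<Sum>i\<in>A. g i t) h)" by (rule ip_swap)
  also have "\<dots> = (\<Sum>i\<in>A. cnj (ip (g i) h))" using assms by (simp add: ip_sum_left)
  also have "\<dots> = (\<Sum>i\<in>A. ip h (g i))" by (simp add: ip_swap[of h])
  finally show ?thesis .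
qed

definition tsum :: "int set \<Rightarrow> (int \<Rightarrow> complex) \<Rightarrow> real \<Rightarrow> complex" where
  "tsum A c t = (\<Sum>k\<in>A. c k * ex k t)"

lemma L2_tsum: "finite A \<Longrightarrow> L2 (tsum A c)"
  unfolding tsum_def by (intro L2_sum L2_cmult L2_ex)

lemma ip_tsum_right: "finite A \<Longrightarrow> L2 f \<Longrightarrow> ip f (tsum A c) = (\<Sum>k\<in>A. cnj (c k) * ip f (ex k))"
  unfolding tsum_def
  by (subst ip_sum_right) (auto intro: L2_cmult L2_ex simp: ip_cmult_right)

lemma ip_tsum_left: "finite A \<Longrightarrow> L2 f \<Longrightarrow> ip (tsum A c) f = (\<Sum>k\<in>A. c k * ip (ex k) f)"
  unfolding tsum_def
  by (subst ip_sum_left) (auto intro: L2_cmult L2_ex simp: ip_cmult_left)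

lemma ip_tsum_ex: "finite A \<Longrightarrow> ip (tsum A c) (ex j) = (if j \<in> A then of_real (2*pi) * c j else 0)"
proof -
  assume A: "finite A"
  have "ip (tsum A c) (ex j) = (\<Sum>k\<in>A. c k * (if k = j then of_real (2*pi) else 0))"
    using A by (simp add: ip_tsum_left L2_ex ip_ex)
  also have "\<dots> = (\<Sum>k\<in>A. if k = j then of_real (2*pi) * c j else 0)"
    by (rule sum.cong) auto
  also have "\<dots> = (if j \<in> A then of_real (2*pi) * c j else 0)"
    using A by (simp add: sum.delta)
  finally show ?thesis .
qed

lemma nn_tsum: "finite A \<Longrightarrow> nn (tsum A c) = 2*pi * (\<Sum>k\<in>A. (cmod (c k))^2)"
proof -
  assume A: "finite A"
  have "ip (tsum A c) (tsum A c) = (\<Sum>k\<in>A. cnj (c k) * ip (tsum A c) (ex k))"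
    using A by (simp add: ip_tsum_right L2_tsum)
  also have "\<dots> = (\<Sum>k\<in>A. of_real (2*pi * (cmod (c k))^2))"
  proof (intro sum.cong refl)
    fix k assume "k \<in> A"
    hence "cnj (c k) * ip (tsum A c) (ex k) = of_real (2*pi) * (c k * cnj (c k))"
      using A by (simp add: ip_tsum_ex)
    also have "\<dots> = of_real (2*pi * (cmod (c k))^2)"
      by (simp only: complex_norm_square[symmetric] of_real_mult)
    finally show "cnj (c k) * ip (tsum A c) (ex k) = of_real (2*pi * (cmod (c k))^2)" .
  qed
  finally have "ip (tsum A c) (tsum A c) = of_real (2*pi * (\<Sum>k\<in>A. (cmod (c k))^2))"
    by (simp add: sum_distrib_left)
  thus ?thesis by (simp add: nn_Re_ip)
qed

text \<open>Fourier partial sums\<close>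

definition cf :: "(real \<Rightarrow> complex) \<Rightarrow> int \<Rightarrow> complex" where
  "cf f k = ip f (ex k) / (2*pi)"

definition SN :: "(real \<Rightarrow> complex) \<Rightarrow> nat \<Rightarrow> real \<Rightarrow> complex" where
  "SN f N = tsum {- int N .. int N} (cf f)"

lemma L2_SN: "L2 (SN f N)"
  unfolding SN_def by (simp add: L2_tsum)

lemma ip_SN_ex: "ip (SN f N) (ex k) = (if k \<in> {- int N .. int N} then ip f (ex k) else 0)"
  unfolding SN_def by (simp add: ip_tsum_ex cf_def)

lemma ip_diff_SN:
  assumes f: "L2 f" and A: "finite A" "A \<subseteq> {- int N .. int N}"
  shows "ip (\<lambda>t. f t - SN f N t) (tsum A c) = 0"
proof -
  have "ip (\<lambda>t. f t - SN f N t) (tsum A c) = (\<Sum>k\<in>A. cnj (c k) * ip (\<lambda>t. f t - SN f N t) (ex k))"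
    using A f by (intro ip_tsum_right) (auto intro: L2_diff L2_SN)
  also have "\<dots> = 0"
    using A f by (intro sum.neutral) (auto simp: ip_diff_left L2_SN L2_ex ip_SN_ex)
  finally show ?thesis .
qed

lemma bessel:
  assumes f: "L2 f"
  shows "nn (\<lambda>t. f t - SN f N t) = nn f - nn (SN f N)"
proof -
  have "nn f = nn (\<lambda>t. (f t - SN f N t) + SN f N t)" by simp
  also have "\<dots> = nn (\<lambda>t. f t - SN f N t) + nn (SN f N) + 2 * Re (ip (\<lambda>t. f t - SN f N t) (SN f N))"
    using f by (intro nn_add L2_diff L2_SN)
  also have "ip (\<lambda>t. f t - SN f N t) (SN f N) = 0"
    unfolding SN_def[of f N] using ip_diff_SN[OF f, of "{- int N .. int N}" N] by (simp add: SN_def)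
  finally show ?thesis by simp
qed

lemma nn_SN: "nn (SN f N) = 2*pi * (\<Sum>k\<in>{- int N .. int N}. (cmod (cf f k))^2)"
  unfolding SN_def by (simp add: nn_tsum)

lemma bessel_le: "L2 f \<Longrightarrow> nn (SN f N) \<le> nn f"
  using bessel[of f N] nn_nonneg[of "\<lambda>t. f t - SN f N t"] by simp



lemma nn_commute: "nn (\<lambda>t. f t - g t) = nn (\<lambda>t. g t - f t)"
  unfolding nn_def by (simp add: norm_minus_commute)

lemma quarter_pow: "(1/4::real)^j = ((1/2)^j)^2"
  by (induction j) (simp_all add: power2_eq_square)

lemma L2_ofreal_norm: "L2 g \<Longrightarrow> L2 (\<lambda>t. of_real (cmod (g t)))"
  unfolding L2_def by auto

lemma nn_ofreal_norm: "nn (\<lambda>t. of_real (cmod (g t))) = nn g"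
  unfolding nn_def by simp

lemma nn_one: "nn (\<lambda>t. 1) = 2*pi"
  unfolding nn_def by (simp add: measure_Mc)

lemma L1_of_L2:
  assumes g: "L2 g"
  shows "integrable Mc (\<lambda>t. cmod (g t))" "(LINT t|Mc. cmod (g t))^2 \<le> 2*pi * nn g"
proof -
  note [measurable] = L2_meas[OF g]
  show i: "integrable Mc (\<lambda>t. cmod (g t))"
  proof (rule Bochner_Integration.integrable_bound[where f="\<lambda>t. 1 + (cmod (g t))^2"])
    show "integrable Mc (\<lambda>t. 1 + (cmod (g t))^2)" using L2_int[OF g] by simp
    show "AE t in Mc. norm (cmod (g t)) \<le> norm (1 + (cmod (g t))^2)"
    proof (intro AE_I2)
      fix t
      have "cmod (g t) \<le> 1 + (cmod (g t))^2"
      proof (cases "cmod (g t) \<le> 1")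
        case False
        hence "cmod (g t) * 1 \<le> cmod (g t) * cmod (g t)" by (intro mult_left_mono) auto
        thus ?thesis by (simp add: power2_eq_square)
      qed (simp add: add_increasing2)
      thus "norm (cmod (g t)) \<le> norm (1 + (cmod (g t))^2)" by simp
    qed
  qed simp
  define h where "h t = complex_of_real (cmod (g t))" for t
  have L2h: "L2 h" unfolding h_def using g by (rule L2_ofreal_norm)
  have "ip h (\<lambda>t. 1) = of_real (LINT t|Mc. cmod (g t))"
    unfolding ip_def h_def by simp
  hence "(cmod (ip h (\<lambda>t. 1)))^2 = (LINT t|Mc. cmod (g t))^2" by simp
  moreover have "(cmod (ip h (\<lambda>t. 1)))^2 \<le> nn h * nn (\<lambda>t. 1)"
    using L2h by (intro CS_ip) (auto intro: L2_bounded[of _ 1])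
  moreover have "nn h = nn g" unfolding h_def by (rule nn_ofreal_norm)
  ultimately show "(LINT t|Mc. cmod (g t))^2 \<le> 2*pi * nn g" by (simp add: nn_one mult.commute)
qed

lemma L1_of_L2_nn:
  assumes g: "L2 g" "nn g \<le> a^2" "0 \<le> a"
  shows "(\<integral>\<^sup>+t. ennreal (cmod (g t)) \<partial>Mc) \<le> ennreal (sqrt (2*pi) * a)"
proof -
  have "(\<integral>\<^sup>+t. ennreal (cmod (g t)) \<partial>Mc) = ennreal (LINT t|Mc. cmod (g t))"
    using L1_of_L2(1)[OF g(1)] by (intro nn_integral_eq_integral) auto
  also have "(LINT t|Mc. cmod (g t)) \<le> sqrt (2*pi) * a"
  proof -
    have "(LINT t|Mc. cmod (g t))^2 \<le> 2*pi * a^2"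
    proof -
      have "2*pi * nn g \<le> 2*pi * a^2" using g(2) by (intro mult_left_mono) auto
      thus ?thesis using L1_of_L2(2)[OF g(1)] by linarith
    qed
    hence "sqrt ((LINT t|Mc. cmod (g t))^2) \<le> sqrt (2*pi * a^2)" by (rule real_sqrt_le_mono)
    thus ?thesis using g(3) by (simp add: real_sqrt_mult)
  qed
  hence "ennreal (LINT t|Mc. cmod (g t)) \<le> ennreal (sqrt (2*pi) * a)" by (rule ennreal_leI)
  finally show ?thesis .
qed

lemma eventually_liminf_le:
  fixes X :: "nat \<Rightarrow> ennreal"
  assumes "\<forall>\<^sub>F n in sequentially. X n \<le> C"
  shows "liminf X \<le> C"
  using Liminf_le_Limsup[of sequentially X] Limsup_bounded[OF assms] by simp

lemma L2_complete:
  fixes f :: "nat \<Rightarrow> real \<Rightarrow> complex"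
  assumes L: "\<And>n. L2 (f n)"
    and C: "\<And>e. e > 0 \<Longrightarrow> \<exists>N. \<forall>m\<ge>N. \<forall>n\<ge>N. nn (\<lambda>t. f m t - f n t) < e"
  shows "\<exists>F. L2 F \<and> (\<lambda>n. nn (\<lambda>t. f n t - F t)) \<longlonglongrightarrow> 0"
proof -
  note [measurable] = L2_meas[OF L]
  have "\<forall>j. \<exists>N. \<forall>m\<ge>N. \<forall>n\<ge>N. nn (\<lambda>t. f m t - f n t) < (1/4::real)^j"
    using C by simp
  from choice[OF this] obtain N where N0: "\<forall>j. \<forall>m\<ge>N j. \<forall>n\<ge>N j. nn (\<lambda>t. f m t - f n t) < (1/4::real)^j"
    by blast
  have N: "\<And>j m n. m \<ge> N j \<Longrightarrow> n \<ge> N j \<Longrightarrow> nn (\<lambda>t. f m t - f n t) < (1/4)^j"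
    using N0 by blast
  define r where "r j = (\<Sum>i\<le>j. N i) + j" for j
  have rN: "N j \<le> r j" for j
    unfolding r_def using member_le_sum[of j "{..j}" N] by auto
  have rmono: "r j \<le> r k" if "j \<le> k" for j k
    unfolding r_def using that by (intro add_mono sum_mono2) auto
  have Nr: "nn (\<lambda>t. f m t - f n t) < (1/4)^j" if "m \<ge> r j" "n \<ge> r j" for j m n
    using N[of j m n] rN[of j] that by auto
  define d where "d j t = f (r (Suc j)) t - f (r j) t" for j t
  have Ld: "L2 (d j)" for j unfolding d_def by (intro L2_diff L)
  note [measurable] = L2_meas[OF Ld]
  have nnd: "nn (d j) \<le> ((1/2)^j)^2" for j
  proof -
    have "nn (d j) < (1/4)^j" unfolding d_def by (rule Nr) (auto intro: rmono)
    thus ?thesis by (simp only: quarter_pow)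
  qed
  have L1d: "(\<integral>\<^sup>+t. ennreal (cmod (d j t)) \<partial>Mc) \<le> ennreal (sqrt (2*pi) * (1/2)^j)" for j
    by (rule L1_of_L2_nn[OF Ld nnd]) simp
  have "(\<integral>\<^sup>+t. (\<Sum>j. ennreal (cmod (d j t))) \<partial>Mc) = (\<Sum>j. \<integral>\<^sup>+t. ennreal (cmod (d j t)) \<partial>Mc)"
    by (rule nn_integral_suminf) simp
  also have "\<dots> \<le> (\<Sum>j. ennreal (sqrt (2*pi) * (1/2)^j))"
    by (intro suminf_le L1d) auto
  also have "\<dots> = ennreal (\<Sum>j. sqrt (2*pi) * (1/2)^j)"
    by (intro suminf_ennreal2 summable_mult summable_geometric) auto
  finally have fin0: "(\<integral>\<^sup>+t. (\<Sum>j. ennreal (cmod (d j t))) \<partial>Mc) \<le> ennreal (\<Sum>j. sqrt (2*pi) * (1/2)^j)" .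
  have fin: "(\<integral>\<^sup>+t. (\<Sum>j. ennreal (cmod (d j t))) \<partial>Mc) \<noteq> \<infinity>"
    using neq_top_trans[OF ennreal_neq_top fin0] by simp
  have "AE t in Mc. (\<Sum>j. ennreal (cmod (d j t))) \<noteq> \<infinity>"
    by (rule nn_integral_PInf_AE[OF _ fin]) simp
  hence conv: "AE t in Mc. convergent (\<lambda>j. f (r j) t)"
  proof eventually_elim
    case (elim t)
    have "summable (\<lambda>j. cmod (d j t))"
      using elim by (intro summable_suminf_not_top) auto
    hence s: "summable (\<lambda>j. d j t)" by (rule summable_norm_cancel)
    have eq: "f (r j) t = f (r 0) t + (\<Sum>i<j. d i t)" for j
      unfolding d_def using sum_lessThan_telescope[of "\<lambda>i. f (r i) t" j] by simp
    have "(\<lambda>j. f (r 0) t + (\<Sum>i<j. d i t)) \<longlonglongrightarrow> f (r 0) t + (\<Sum>i. d i t)"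
      by (intro tendsto_add tendsto_const summable_LIMSEQ s)
    thus ?case unfolding eq[symmetric] convergent_def by blast
  qed
  define F where "F t = lim (\<lambda>j. f (r j) t)" for t
  have measF[measurable]: "F \<in> borel_measurable Mc" unfolding F_def by measurable
  have limF: "AE t in Mc. (\<lambda>j. f (r j) t) \<longlonglongrightarrow> F t"
    using conv by eventually_elim (simp add: F_def convergent_LIMSEQ_iff)
  have tail: "nn (\<lambda>t. F t - f (r j) t) \<le> (1/4)^j \<and> L2 (\<lambda>t. F t - f (r j) t)" for j
  proof -
    let ?u = "\<lambda>k t. ennreal ((cmod (f (r k) t - f (r j) t))^2)"
    have "(\<integral>\<^sup>+t. ennreal ((cmod (F t - f (r j) t))^2) \<partial>Mc) = (\<integral>\<^sup>+t. liminf (\<lambda>k. ?u k t) \<partial>Mc)"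
    proof (rule nn_integral_cong_AE)
      show "AE t in Mc. ennreal ((cmod (F t - f (r j) t))^2) = liminf (\<lambda>k. ?u k t)"
        using limF
      proof eventually_elim
        case (elim t)
        have "(\<lambda>k. ?u k t) \<longlonglongrightarrow> ennreal ((cmod (F t - f (r j) t))^2)"
          by (intro tendsto_ennrealI tendsto_intros elim)
        from lim_imp_Liminf[OF trivial_limit_sequentially this] show ?case by (rule sym)
      qed
    qed
    also have "\<dots> \<le> liminf (\<lambda>k. \<integral>\<^sup>+t. ?u k t \<partial>Mc)"
      by (rule nn_integral_liminf) simp
    also have "\<dots> \<le> ennreal ((1/4)^j)"
    proof (rule eventually_liminf_le)
      show "\<forall>\<^sub>F k in sequentially. (\<integral>\<^sup>+t. ?u k t \<partial>Mc) \<le> ennreal ((1/4)^j)"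
        using eventually_ge_at_top[of j]
      proof eventually_elim
        case (elim k)
        have "(\<integral>\<^sup>+t. ?u k t \<partial>Mc) = ennreal (nn (\<lambda>t. f (r k) t - f (r j) t))"
          unfolding nn_def using L2_int[OF L2_diff[OF L L]]
          by (intro nn_integral_eq_integral) auto
        also have "\<dots> \<le> ennreal ((1/4)^j)"
          using Nr[of j "r k" "r j"] rmono[OF elim] by (intro ennreal_leI) auto
        finally show ?case .
      qed
    qed
    finally have I: "(\<integral>\<^sup>+t. ennreal ((cmod (F t - f (r j) t))^2) \<partial>Mc) \<le> ennreal ((1/4)^j)" .
    have ntop: "(\<integral>\<^sup>+t. ennreal ((cmod (F t - f (r j) t))^2) \<partial>Mc) \<noteq> top"
      using neq_top_trans[OF ennreal_neq_top I] by simp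
    define x where "x = enn2real (\<integral>\<^sup>+t. ennreal ((cmod (F t - f (r j) t))^2) \<partial>Mc)"
    have x: "(\<integral>\<^sup>+t. ennreal ((cmod (F t - f (r j) t))^2) \<partial>Mc) = ennreal x"
      unfolding x_def using ntop by (simp add: ennreal_enn2real_if)
    have int: "integrable Mc (\<lambda>t. (cmod (F t - f (r j) t))^2)"
      by (rule integrableI_nn_integral_finite[OF _ _ x(1)]) auto
    have L2F: "L2 (\<lambda>t. F t - f (r j) t)" unfolding L2_def using int by simp
    have "ennreal (nn (\<lambda>t. F t - f (r j) t)) \<le> ennreal ((1/4)^j)"
      using I unfolding nn_def using int by (subst nn_integral_eq_integral[symmetric]) auto
    hence "nn (\<lambda>t. F t - f (r j) t) \<le> (1/4)^j"
      by (subst (asm) ennreal_le_iff) auto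
    thus ?thesis using L2F by simp
  qed
  have L2F: "L2 F"
  proof -
    have "L2 (\<lambda>t. (F t - f (r 0) t) + f (r 0) t)" using tail[of 0] L by (intro L2_add) auto
    thus ?thesis by simp
  qed
  have "(\<lambda>n. nn (\<lambda>t. f n t - F t)) \<longlonglongrightarrow> 0"
  proof (rule LIMSEQ_I)
    fix e :: real assume e: "0 < e"
    obtain j where j: "4 * (1/4)^j < e"
    proof -
      have t4: "(\<lambda>j. 4 * (1/4::real)^j) \<longlonglongrightarrow> 4 * 0"
        by (intro tendsto_mult tendsto_const LIMSEQ_power_zero) auto
      from order_tendstoD(2)[OF t4] e have "\<forall>\<^sub>F j in sequentially. 4 * (1/4::real)^j < e" by simp
      thus ?thesis using that by (auto dest: eventually_happens)
    qed
    show "\<exists>no. \<forall>n\<ge>no. norm (nn (\<lambda>t. f n t - F t) - 0) < e"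
    proof (intro exI allI impI)
      fix n assume n: "r j \<le> n"
      have a: "sqrt (nn (\<lambda>t. f n t - f (r j) t)) \<le> (1/2)^j"
      proof -
        have "nn (\<lambda>t. f n t - f (r j) t) \<le> ((1/2)^j)^2"
          using Nr[of j n "r j"] n by (simp only: quarter_pow) simp
        thus ?thesis by (simp add: real_sqrt_le_iff real_le_lsqrt nn_nonneg)
      qed
      have b: "sqrt (nn (\<lambda>t. f (r j) t - F t)) \<le> (1/2)^j"
      proof -
        have "nn (\<lambda>t. f (r j) t - F t) \<le> ((1/2)^j)^2"
          using tail[of j] nn_commute[of "f (r j)" F] by (simp only: quarter_pow)
        thus ?thesis by (simp add: real_le_lsqrt nn_nonneg)
      qed
      have "sqrt (nn (\<lambda>t. f n t - F t)) = sqrt (nn (\<lambda>t. (f n t - f (r j) t) + (f (r j) t - F t)))"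
        by simp
      also have "\<dots> \<le> sqrt (nn (\<lambda>t. f n t - f (r j) t)) + sqrt (nn (\<lambda>t. f (r j) t - F t))"
        by (intro nn_triangle L2_diff L L2F)
      also have "\<dots> \<le> 2 * (1/2)^j" using a b by simp
      finally have "(sqrt (nn (\<lambda>t. f n t - F t)))^2 \<le> (2 * (1/2)^j)^2"
        by (intro power_mono) (auto simp: nn_nonneg)
      moreover have "(sqrt (nn (\<lambda>t. f n t - F t)))^2 = nn (\<lambda>t. f n t - F t)"
        using nn_nonneg by simp
      moreover have "(2 * (1/2::real)^j)^2 = 4 * (1/4)^j"
        by (simp only: quarter_pow power_mult_distrib) simp
      ultimately have "nn (\<lambda>t. f n t - F t) \<le> 4 * (1/4)^j" by simp
      thus "norm (nn (\<lambda>t. f n t - F t) - 0) < e" using j nn_nonneg[of "\<lambda>t. f n t - F t"] by simp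
    qed
  qed
  with L2F show ?thesis by blast
qed



section \<open>Trigonometric polynomials\<close>

inductive TP :: "(real \<Rightarrow> complex) \<Rightarrow> bool" where
  mon: "TP (\<lambda>t. c * ex k t)"
| add: "TP p \<Longrightarrow> TP q \<Longrightarrow> TP (\<lambda>t. p t + q t)"

lemma TP_const: "TP (\<lambda>t. c)"
  using TP.mon[of c 0] by simp

lemma TP_cmult: "TP p \<Longrightarrow> TP (\<lambda>t. c * p t)"
proof (induction rule: TP.induct)
  case (mon d k) thus ?case using TP.mon[of "c*d" k] by (simp add: mult.assoc)
next
  case (add p q) thus ?case using TP.add by (simp add: distrib_left)
qed

lemma TP_mult_mon: "TP q \<Longrightarrow> TP (\<lambda>t. (c * ex k t) * q t)"
proof (induction rule: TP.induct)
  case (mon d j)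
  have "(\<lambda>t. (c * ex k t) * (d * ex j t)) = (\<lambda>t. (c*d) * ex (k+j) t)"
    by (auto simp: ex_mult[symmetric] algebra_simps)
  thus ?case by (simp add: TP.mon)
next
  case (add p q) thus ?case using TP.add by (simp add: distrib_left)
qed

lemma TP_mult: "TP p \<Longrightarrow> TP q \<Longrightarrow> TP (\<lambda>t. p t * q t)"
proof (induction arbitrary: q rule: TP.induct)
  case (mon c k) thus ?case by (rule TP_mult_mon)
next
  case (add p1 p2) thus ?case using TP.add by (simp add: distrib_right)
qed

lemma TP_L2: "TP p \<Longrightarrow> L2 p"
  by (induction rule: TP.induct) (auto intro: L2_add L2_cmult L2_ex)

lemma TP_orth:
  assumes f: "L2 f" and z: "\<And>k. ip f (ex k) = 0" and p: "TP p"
  shows "(LINT t|Mc. f t * p t) = 0"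
  using p
proof (induction rule: TP.induct)
  case (mon c k)
  have "(LINT t|Mc. f t * (c * ex k t)) = c * (LINT t|Mc. f t * cnj (ex (-k) t))"
    by (simp add: cnj_ex algebra_simps)
  also have "\<dots> = 0" using z[of "-k"] unfolding ip_def by simp
  finally show ?case .
next
  case (add p q)
  have i: "integrable Mc (\<lambda>t. f t * r t)" if "TP r" for r
  proof -
    have "integrable Mc (\<lambda>t. f t * cnj (cnj (r t)))"
      using integrable_ip[OF f L2_cnj[OF TP_L2[OF that]]] .
    thus ?thesis by simp
  qed
  have "(LINT t|Mc. f t * (p t + q t)) = (LINT t|Mc. f t * p t + f t * q t)"
    by (simp add: distrib_left)
  also have "\<dots> = (LINT t|Mc. f t * p t) + (LINT t|Mc. f t * q t)"
    by (rule Bochner_Integration.integral_add[OF i[OF add.hyps(1)] i[OF add.hyps(2)]])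
  finally show ?case using add.IH by simp
qed

section \<open>Polynomial functions on the circle\<close>

lemma cis_ex: "exp (\<i> * complex_of_real t) = ex 1 t"
  unfolding ex_def by simp

lemma cos_ex: "complex_of_real (cos t) = (ex 1 t + ex (-1) t) / 2"
  using cos_exp_eq[of "complex_of_real t"] unfolding ex_def by (simp add: cos_of_real)

lemma sin_ex: "complex_of_real (sin t) = (ex 1 t - ex (-1) t) / (2 * \<i>)"
  using sin_exp_eq[of "complex_of_real t"] unfolding ex_def by (simp add: sin_of_real)

lemma TP_cos: "TP (\<lambda>t. complex_of_real (cos t))"
proof -
  have "TP (\<lambda>t. (1/2) * ex 1 t + (1/2) * ex (-1) t)" by (intro TP.add TP.mon)
  moreover have "(\<lambda>t. (1/2) * ex 1 t + (1/2) * ex (-1) t) = (\<lambda>t. complex_of_real (cos t))"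
    by (rule ext) (simp add: cos_ex field_simps)
  ultimately show ?thesis by simp
qed

lemma TP_sin: "TP (\<lambda>t. complex_of_real (sin t))"
proof -
  have "TP (\<lambda>t. (1/(2*\<i>)) * ex 1 t + (-1/(2*\<i>)) * ex (-1) t)" by (intro TP.add TP.mon)
  moreover have "(\<lambda>t. (1/(2*\<i>)) * ex 1 t + (-1/(2*\<i>)) * ex (-1) t) = (\<lambda>t. complex_of_real (sin t))"
    by (rule ext) (simp add: sin_ex field_simps)
  ultimately show ?thesis by simp
qed

lemma rpf_TP:
  assumes "real_polynomial_function g"
  shows "TP (\<lambda>t. complex_of_real (g (exp (\<i> * complex_of_real t) :: complex)))"
  using assms
proof (induction rule: real_polynomial_function.induct)
  case (linear f)
  interpret bounded_linear f by fact
  have eq: "f z = Re z * f 1 + Im z * f \<i>" for z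
  proof -
    have "z = Re z *\<^sub>R 1 + Im z *\<^sub>R \<i>" by (simp add: complex_eq_iff)
    hence "f z = f (Re z *\<^sub>R 1 + Im z *\<^sub>R \<i>)" by simp
    also have "\<dots> = Re z * f 1 + Im z * f \<i>" by (simp add: add scale)
    finally show ?thesis .
  qed
  have "(\<lambda>t. complex_of_real (f (exp (\<i> * complex_of_real t))))
      = (\<lambda>t. complex_of_real (f 1) * complex_of_real (cos t) + complex_of_real (f \<i>) * complex_of_real (sin t))"
  proof (rule ext)
    fix t
    show "complex_of_real (f (exp (\<i> * complex_of_real t)))
      = complex_of_real (f 1) * complex_of_real (cos t) + complex_of_real (f \<i>) * complex_of_real (sin t)"
      unfolding eq[of "exp (\<i> * complex_of_real t)"] by (simp add: Re_exp Im_exp mult.commute)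
  qed
  moreover have "TP \<dots>" by (intro TP.add TP_cmult TP_cos TP_sin)
  ultimately show ?case by simp
next
  case (const c) thus ?case by (simp add: TP_const)
next
  case (add f g) thus ?case by (simp add: TP.add)
next
  case (mult f g) thus ?case by (simp add: TP_mult)
qed

lemma pf_TP:
  fixes p :: "complex \<Rightarrow> complex"
  assumes "polynomial_function p"
  shows "TP (\<lambda>t. p (exp (\<i> * complex_of_real t)))"
proof -
  have r: "real_polynomial_function (\<lambda>z. Re (p z))" "real_polynomial_function (\<lambda>z. Im (p z))"
    using assms unfolding polynomial_function_def o_def
    by (auto intro: bounded_linear_Re bounded_linear_Im)
  have "TP (\<lambda>t. complex_of_real (Re (p (exp (\<i> * complex_of_real t))))
          + \<i> * complex_of_real (Im (p (exp (\<i> * complex_of_real t)))))"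
    by (intro TP.add TP_cmult rpf_TP r)
  moreover have "(\<lambda>t. complex_of_real (Re (p (exp (\<i> * complex_of_real t))))
          + \<i> * complex_of_real (Im (p (exp (\<i> * complex_of_real t))))) = (\<lambda>t. p (exp (\<i> * complex_of_real t)))"
    by (rule ext) (rule complex_eq[symmetric])
  ultimately show ?thesis by simp
qed

section \<open>Continuous functions vanishing near the endpoints\<close>

lemma cos_gt_imp:
  assumes "0 \<le> a" "a < 2*pi" "cos a > cos d" "0 < d" "d < pi"
  shows "a < d \<or> a > 2*pi - d"
proof (rule ccontr)
  assume "\<not> (a < d \<or> a > 2*pi - d)"
  hence a: "d \<le> a" "a \<le> 2*pi - d" by auto
  show False
  proof (cases "a \<le> pi")
    case True
    hence "cos a \<le> cos d" using a assms by (intro cos_monotone_0_pi_le) auto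
    thus False using assms by simp
  next
    case False
    have "cos (2*pi - a) \<le> cos d" using a assms False by (intro cos_monotone_0_pi_le) auto
    moreover have "cos (2*pi - a) = cos a" by (simp add: cos_diff)
    ultimately show False using assms by simp
  qed
qed

lemma circle_cont:
  fixes k :: "real \<Rightarrow> complex"
  assumes k: "continuous_on UNIV k" and d: "0 < d" "d < pi"
    and k0: "\<And>t. t \<le> d \<Longrightarrow> k t = 0" and k1: "\<And>t. t \<ge> 2*pi - d \<Longrightarrow> k t = 0"
  shows "continuous_on (sphere 0 1) (\<lambda>z. k (Arg2pi z))"
proof -
  define A where "A = sphere (0::complex) 1 \<inter> {z. Re z > cos d}"
  define B where "B = sphere (0::complex) 1 - {1}"
  have AB: "sphere 0 1 = A \<union> B"
  proof -
    have "Re (1::complex) > cos d" using d cos_monotone_0_pi[of 0 d] by simp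
    thus ?thesis unfolding A_def B_def by auto
  qed
  have zeroA: "k (Arg2pi z) = 0" if "z \<in> A" for z
  proof -
    have z1: "norm z = 1" using that by (simp add: A_def)
    hence "exp (\<i> * complex_of_real (Arg2pi z)) = z" using complex_norm_eq_1_exp by blast
    hence "Re z = Re (exp (\<i> * complex_of_real (Arg2pi z)))" by simp
    also have "\<dots> = cos (Arg2pi z)" by (simp add: Re_exp)
    finally have "Re z = cos (Arg2pi z)" .
    hence "cos (Arg2pi z) > cos d" using that by (simp add: A_def)
    hence "Arg2pi z < d \<or> Arg2pi z > 2*pi - d"
      using Arg2pi[of z] d by (intro cos_gt_imp) auto
    thus ?thesis using k0 k1 by force
  qed
  have cA: "continuous_on A (\<lambda>z. k (Arg2pi z))"
    by (rule continuous_on_eq[where f="\<lambda>z. 0"]) (auto simp: zeroA)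
  have cB: "continuous_on B (\<lambda>z. k (Arg2pi z))"
  proof (rule continuous_at_imp_continuous_on, intro ballI)
    fix z assume z: "z \<in> B"
    have "z \<notin> \<real>\<^sub>\<ge>\<^sub>0"
    proof
      assume "z \<in> \<real>\<^sub>\<ge>\<^sub>0"
      then obtain r where "z = of_real r" "0 \<le> r" by (auto simp: nonneg_Reals_def)
      moreover have "norm z = 1" using z by (simp add: B_def)
      ultimately have "z = 1" by simp
      thus False using z by (simp add: B_def)
    qed
    hence "continuous (at z) Arg2pi" by (rule continuous_at_Arg2pi)
    thus "continuous (at z) (\<lambda>z. k (Arg2pi z))"
      using k by (intro continuous_at_compose[unfolded o_def, of z Arg2pi k])
        (auto intro: continuous_on_interior[where S=UNIV])
  qed
  have oA: "openin (top_of_set (A \<union> B)) A"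
  proof -
    have o: "open {z::complex. Re z > cos d}" by (intro open_Collect_less continuous_intros)
    have "A = (A \<union> B) \<inter> {z. Re z > cos d}" unfolding A_def B_def by auto
    moreover have "openin (top_of_set (A \<union> B)) ((A \<union> B) \<inter> {z. Re z > cos d})"
      by (rule openin_open_Int[OF o])
    ultimately show ?thesis by simp
  qed
  have oB: "openin (top_of_set (A \<union> B)) B"
  proof -
    have "B = (A \<union> B) \<inter> (- {1})" unfolding A_def B_def by auto
    moreover have "openin (top_of_set (A \<union> B)) ((A \<union> B) \<inter> (- {1}))"
      by (rule openin_open_Int) (simp add: open_Compl)
    ultimately show ?thesis by simp
  qed
  have "continuous_on (A \<union> B) (\<lambda>z. if z \<in> A then k (Arg2pi z) else k (Arg2pi z))"
    by (rule continuous_on_cases_local_open[OF oA oB cA cB]) auto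
  thus ?thesis using AB by simp
qed

lemma uniform_TP_approx:
  fixes k :: "real \<Rightarrow> complex"
  assumes k: "continuous_on UNIV k" and d: "0 < d" "d < pi"
    and k0: "\<And>t. t \<le> d \<Longrightarrow> k t = 0" and k1: "\<And>t. t \<ge> 2*pi - d \<Longrightarrow> k t = 0"
    and e: "e > 0"
  shows "\<exists>q. TP q \<and> (\<forall>t\<in>circ. cmod (k t - q t) < e)"
proof -
  have "\<exists>p. polynomial_function p \<and> (\<forall>z \<in> sphere 0 1. norm (k (Arg2pi z) - p z) < e)"
    by (rule Stone_Weierstrass_polynomial_function[OF compact_sphere circle_cont[OF assms(1-5)] e])
  then obtain p :: "complex \<Rightarrow> complex" where p: "polynomial_function p"
    "\<And>z. z \<in> sphere 0 1 \<Longrightarrow> norm (k (Arg2pi z) - p z) < e" by blast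
  show ?thesis
  proof (intro exI conjI ballI)
    show "TP (\<lambda>t. p (exp (\<i> * complex_of_real t)))" by (rule pf_TP[OF p(1)])
    fix t assume t: "t \<in> circ"
    have in_s: "exp (\<i> * complex_of_real t) \<in> sphere 0 1" by (simp add: norm_exp_eq_Re)
    have "k (Arg2pi (exp (\<i> * complex_of_real t))) = k t"
    proof (cases "t < 2*pi")
      case True
      have "Arg2pi (exp (\<i> * complex_of_real t)) = t"
        using t True by (intro Arg2pi_exp[of "\<i> * complex_of_real t", simplified]) (auto simp: circ_def)
      thus ?thesis by simp
    next
      case False
      hence "t = 2*pi" using t by (simp add: circ_def)
      moreover have "exp (\<i> * complex_of_real (2*pi)) = 1"
        using exp_two_pi_i by (simp add: mult.commute)
      moreover have "Arg2pi 1 = 0" by (simp add: Arg2pi_eq_0)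
      ultimately show ?thesis using k0[of 0] k1[of t] d by simp
    qed
    thus "cmod (k t - p (exp (\<i> * complex_of_real t))) < e" using p(2)[OF in_s] by simp
  qed
qed

lemma L2_cont_bounded:
  assumes "continuous_on UNIV (k::real \<Rightarrow> complex)"
  shows "L2 k" "\<exists>C. \<forall>t\<in>circ. cmod (k t) \<le> C"
proof -
  have "compact (k ` circ)" unfolding circ_def
    by (intro compact_continuous_image continuous_on_subset[OF assms]) auto
  from compact_imp_bounded[OF this] obtain C where "\<forall>x\<in>k ` circ. norm x \<le> C"
    by (auto simp: bounded_iff)
  hence C: "\<forall>t\<in>circ. cmod (k t) \<le> C" by simp
  thus "\<exists>C. \<forall>t\<in>circ. cmod (k t) \<le> C" by blast
  show "L2 k" by (rule L2_bounded[of _ C]) (auto intro: cont_meas assms AE_I2 simp: C)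
qed

lemma orth_cont:
  assumes f: "L2 f" and z: "\<And>k. ip f (ex k) = 0"
    and k: "continuous_on UNIV k" and d: "0 < d" "d < pi"
    and k0: "\<And>t. t \<le> d \<Longrightarrow> k t = 0" and k1: "\<And>t. t \<ge> 2*pi - d \<Longrightarrow> k t = 0"
  shows "(LINT t|Mc. f t * k t) = 0"
proof -
  note [measurable] = L2_meas[OF f] cont_meas[OF k]
  have ik: "L2 k" using L2_cont_bounded[OF k] by simp
  have i1: "integrable Mc (\<lambda>t. cmod (f t))" using L1_of_L2(1)[OF f] .
  have intk: "integrable Mc (\<lambda>t. f t * k t)"
    using integrable_ip[OF f L2_cnj[OF ik]] by simp
  have "cmod (LINT t|Mc. f t * k t) \<le> e * (LINT t|Mc. cmod (f t))" if e: "e > 0" for e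
  proof -
    obtain q where q: "TP q" "\<And>t. t \<in> circ \<Longrightarrow> cmod (k t - q t) < e"
      using uniform_TP_approx[OF k d k0 k1 e] by blast
    have intq: "integrable Mc (\<lambda>t. f t * q t)"
      using integrable_ip[OF f L2_cnj[OF TP_L2[OF q(1)]]] by simp
    have "(LINT t|Mc. f t * k t) = (LINT t|Mc. f t * k t) - (LINT t|Mc. f t * q t)"
      using TP_orth[OF f z q(1)] by simp
    also have "\<dots> = (LINT t|Mc. f t * (k t - q t))"
      using intk intq by (simp add: right_diff_distrib)
    finally have "cmod (LINT t|Mc. f t * k t) = cmod (LINT t|Mc. f t * (k t - q t))" by simp
    also have "\<dots> \<le> (LINT t|Mc. cmod (f t * (k t - q t)))"
      by (rule integral_norm_bound)
    also have "\<dots> \<le> (LINT t|Mc. e * cmod (f t))"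
    proof (rule integral_mono_AE)
      show "integrable Mc (\<lambda>t. cmod (f t * (k t - q t)))"
        using intk intq by (simp add: right_diff_distrib)
      show "integrable Mc (\<lambda>t. e * cmod (f t))" using i1 by simp
      show "AE t in Mc. cmod (f t * (k t - q t)) \<le> e * cmod (f t)"
      proof (rule AE_I2)
        fix t assume "t \<in> space Mc"
        hence "cmod (k t - q t) \<le> e" using q(2) by (simp add: less_imp_le)
        hence "cmod (f t) * cmod (k t - q t) \<le> cmod (f t) * e" by (rule mult_left_mono) simp
        thus "cmod (f t * (k t - q t)) \<le> e * cmod (f t)"
          by (simp add: norm_mult mult.commute)
      qed
    qed
    finally show ?thesis by simp
  qed
  hence "cmod (LINT t|Mc. f t * k t) \<le> 0"
  proof -
    assume H: "\<And>e. e > 0 \<Longrightarrow> cmod (LINT t|Mc. f t * k t) \<le> e * (LINT t|Mc. cmod (f t))"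
    define I where "I = (LINT t|Mc. cmod (f t))"
    have I0: "I \<ge> 0" unfolding I_def by (rule integral_nonneg_AE) simp
    show ?thesis
    proof (rule field_le_epsilon)
      fix e :: real assume e: "e > 0"
      have ep: "e / (I + 1) > 0" using e I0 by simp
      have "cmod (LINT t|Mc. f t * k t) \<le> (e / (I + 1)) * I"
        using H[OF ep] by (simp add: I_def)
      also have "\<dots> \<le> e" using e I0 by (simp add: field_simps)
      finally show "cmod (LINT t|Mc. f t * k t) \<le> 0 + e" by simp
    qed
  qed
  thus ?thesis by simp
qed

section \<open>Uniqueness of Fourier coefficients\<close>

lemma mult_cnj_sq: "z * cnj z = (complex_of_real (cmod z))^2"
  using complex_norm_square[of z] by (simp only: of_real_power)

definition clip :: "real \<Rightarrow> complex \<Rightarrow> complex" where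
  "clip C z = z / complex_of_real (max 1 (cmod z / C))"

lemma max1_nz: "complex_of_real (max 1 x) \<noteq> 0"
  by (simp add: max_def)

lemma clip_cont: "continuous_on UNIV (clip C)"
  unfolding clip_def divide_inverse by (intro continuous_intros) (auto simp: max1_nz)

lemma clip_bound: "C > 0 \<Longrightarrow> cmod (clip C z) \<le> C"
  unfolding clip_def
proof (cases "cmod z / C \<le> 1")
  case True
  assume C: "C > 0"
  thus "cmod (z / complex_of_real (max 1 (cmod z / C))) \<le> C"
    using True by (simp add: norm_divide field_simps)
next
  case False
  assume C: "C > 0"
  hence "max 1 (cmod z / C) = cmod z / C" using False by simp
  moreover have "cmod z > 0" using False C by (auto simp: field_simps)
  ultimately show "cmod (z / complex_of_real (max 1 (cmod z / C))) \<le> C"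
    using C by (simp add: norm_divide norm_mult)
qed

lemma clip_id: "C > 0 \<Longrightarrow> cmod z \<le> C \<Longrightarrow> clip C z = z"
  unfolding clip_def by simp

definition cutoff :: "nat \<Rightarrow> real \<Rightarrow> real" where
  "cutoff n t = min 1 (max 0 ((t - pi/(real n+2)) / (pi/(real n+2)))) *
                min 1 (max 0 ((2*pi - pi/(real n+2) - t) / (pi/(real n+2))))"

lemma cutoff_cont: "continuous_on UNIV (cutoff n)"
  unfolding cutoff_def by (intro continuous_intros) auto

lemma cutoff_bound: "0 \<le> cutoff n t" "cutoff n t \<le> 1"
  unfolding cutoff_def by (auto intro: mult_le_one)

lemma cutoff_0: "t \<le> pi/(real n+2) \<Longrightarrow> cutoff n t = 0"
proof -
  assume t: "t \<le> pi/(real n+2)"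
  have "(t - pi/(real n+2)) / (pi/(real n+2)) \<le> 0" using t by (intro divide_nonpos_pos) auto
  thus "cutoff n t = 0" unfolding cutoff_def by (simp add: max_def)
qed

lemma cutoff_1: "t \<ge> 2*pi - pi/(real n+2) \<Longrightarrow> cutoff n t = 0"
proof -
  assume t: "t \<ge> 2*pi - pi/(real n+2)"
  have "(2*pi - pi/(real n+2) - t) / (pi/(real n+2)) \<le> 0" using t by (intro divide_nonpos_pos) auto
  thus "cutoff n t = 0" unfolding cutoff_def by (simp add: max_def)
qed

lemma pi_over_lim: "(\<lambda>n. pi / (real n + 2)) \<longlonglongrightarrow> 0"
proof -
  have "filterlim (\<lambda>n. 2 + real n) at_top sequentially"
    by (rule filterlim_tendsto_add_at_top[OF tendsto_const filterlim_real_sequentially])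
  hence "filterlim (\<lambda>n. real n + 2) at_infinity sequentially"
    by (simp add: add.commute filterlim_at_top_imp_at_infinity)
  thus ?thesis by (rule tendsto_divide_0[OF tendsto_const])
qed

lemma cutoff_lim:
  assumes "0 < t" "t < 2*pi"
  shows "(\<lambda>n. cutoff n t) \<longlonglongrightarrow> 1"
proof -
  have l: "(\<lambda>n. pi / (real n + 2)) \<longlonglongrightarrow> 0" by (rule pi_over_lim)
  have e1: "\<forall>\<^sub>F n in sequentially. pi / (real n + 2) < t / 2"
    by (rule order_tendstoD(2)[OF l]) (use assms in simp)
  have e2: "\<forall>\<^sub>F n in sequentially. pi / (real n + 2) < (2*pi - t) / 2"
    by (rule order_tendstoD(2)[OF l]) (use assms in simp)
  from e1 e2 have "\<forall>\<^sub>F n in sequentially. cutoff n t = 1"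
  proof eventually_elim
    case (elim n)
    define a where "a = pi / (real n + 2)"
    have a1: "a < t/2" "a < (2*pi - t)/2" using elim by (simp_all add: a_def)
    have a0: "0 < a" by (simp add: a_def)
    have a2: "2*a \<le> t" "2*a \<le> 2*pi - t" using a1 by (simp_all add: field_simps)
    note a = a0 a2
    have "1 \<le> (t - a) / a" "1 \<le> (2*pi - a - t) / a" using a by (auto simp: field_simps)
    hence "cutoff n t = 1 * 1" unfolding cutoff_def a_def[symmetric] by (auto simp: min_def max_def)
    thus ?case by simp
  qed
  thus ?thesis by (rule tendsto_eventually)
qed

lemma AE_Mc_negligible:
  assumes "negligible N" shows "AE t in Mc. t \<notin> N"
proof -
  have "N \<in> null_sets lebesgue" using assms by (simp add: negligible_iff_null_sets)
  hence "AE t in lebesgue. t \<notin> N" by (rule AE_not_in)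
  hence "AE t in lebesgue. t \<in> circ \<longrightarrow> t \<notin> N" by eventually_elim simp
  thus ?thesis by (subst AE_restrict_space_iff) auto
qed

lemma orth_bounded:
  assumes f: "L2 f" and z: "\<And>k. ip f (ex k) = 0"
    and h: "h \<in> borel_measurable Mc" and C: "C > 0" and hb: "\<And>t. t \<in> circ \<Longrightarrow> cmod (h t) \<le> C"
  shows "(LINT t|Mc. f t * h t) = 0"
proof -
  note [measurable] = L2_meas[OF f] h
  have "h measurable_on circ"
    by (subst measurable_on_iff_borel_measurable[OF circ_sets]) (rule h)
  then obtain N g where N: "negligible N" and gc: "\<And>n. continuous_on UNIV (g n)"
    and gl: "\<And>x. x \<notin> N \<Longrightarrow> (\<lambda>n. g n x) \<longlonglongrightarrow> (if x \<in> circ then h x else 0)"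
    unfolding measurable_on_def by blast
  define k where "k n t = complex_of_real (cutoff n t) * clip C (g n t)" for n t
  have kc: "continuous_on UNIV (k n)" for n
    unfolding k_def
    by (intro continuous_intros continuous_on_compose2[OF clip_cont gc] continuous_on_compose2[OF cutoff_cont]) auto
  have kb: "cmod (k n t) \<le> C" for n t
  proof -
    have "cmod (k n t) = cutoff n t * cmod (clip C (g n t))"
      unfolding k_def using cutoff_bound[of n t] by (simp add: norm_mult)
    also have "\<dots> \<le> 1 * C"
      using cutoff_bound[of n t] clip_bound[OF C] by (intro mult_mono) auto
    finally show ?thesis by simp
  qed
  have k0: "(LINT t|Mc. f t * k n t) = 0" for n
  proof (rule orth_cont[OF f z kc, of "pi/(real n+2)"])
    show "0 < pi / (real n + 2)" by simp
    show "pi / (real n + 2) < pi" using divide_strict_left_mono[of 1 "real n + 2" pi] by simp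
    show "k n t = 0" if "t \<le> pi / (real n + 2)" for t using that cutoff_0 by (simp add: k_def)
    show "k n t = 0" if "t \<ge> 2*pi - pi / (real n + 2)" for t using that cutoff_1 by (simp add: k_def)
  qed
  have "(\<lambda>n. LINT t|Mc. f t * k n t) \<longlonglongrightarrow> (LINT t|Mc. f t * h t)"
  proof (rule integral_dominated_convergence[where w="\<lambda>t. C * cmod (f t)"])
    show "(\<lambda>t. f t * h t) \<in> borel_measurable Mc" by simp
    show "(\<lambda>t. f t * k n t) \<in> borel_measurable Mc" for n
      using cont_meas[OF kc] by simp
    show "integrable Mc (\<lambda>t. C * cmod (f t))" using L1_of_L2(1)[OF f] by simp
    show "AE t in Mc. norm (f t * k n t) \<le> C * cmod (f t)" for n
    proof (intro AE_I2)
      fix t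
      have "cmod (f t) * cmod (k n t) \<le> cmod (f t) * C" by (rule mult_left_mono[OF kb]) simp
      thus "norm (f t * k n t) \<le> C * cmod (f t)" by (simp add: norm_mult mult.commute)
    qed
    have "negligible (N \<union> {0, 2*pi})" using N by (intro negligible_Un[OF N] negligible_finite) auto
    from AE_Mc_negligible[OF this]
    show "AE t in Mc. (\<lambda>n. f t * k n t) \<longlonglongrightarrow> f t * h t"
    proof (rule AE_mp, intro AE_I2 impI)
      fix t assume t: "t \<in> space Mc" "t \<notin> N \<union> {0, 2*pi}"
      hence tc: "t \<in> circ" "0 < t" "t < 2*pi" by (auto simp: circ_def)
      have "(\<lambda>n. g n t) \<longlonglongrightarrow> h t" using gl[of t] t tc by simp
      hence "(\<lambda>n. clip C (g n t)) \<longlonglongrightarrow> clip C (h t)"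
        by (rule continuous_on_tendsto_compose[OF clip_cont]) auto
      hence "(\<lambda>n. clip C (g n t)) \<longlonglongrightarrow> h t" using clip_id[OF C hb[OF tc(1)]] by simp
      moreover have "(\<lambda>n. complex_of_real (cutoff n t)) \<longlonglongrightarrow> complex_of_real 1"
        by (intro tendsto_of_real cutoff_lim tc)
      ultimately have "(\<lambda>n. k n t) \<longlonglongrightarrow> 1 * h t" unfolding k_def by (intro tendsto_mult) simp_all
      thus "(\<lambda>n. f t * k n t) \<longlonglongrightarrow> f t * h t" by (intro tendsto_mult tendsto_const) simp
    qed
  qed
  thus ?thesis using k0 by (simp add: LIMSEQ_const_iff)
qed

lemma fourier_unique:
  assumes f: "L2 f" and z: "\<And>k. ip f (ex k) = 0"
  shows "AE t in Mc. f t = 0"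
proof -
  note [measurable] = L2_meas[OF f]
  have "AE t in Mc. cmod (f t) \<le> real M \<longrightarrow> f t = 0" for M :: nat
  proof -
    define h where "h t = (if cmod (f t) \<le> real M then cnj (f t) else 0)" for t
    have hm: "h \<in> borel_measurable Mc" unfolding h_def by measurable
    have "(LINT t|Mc. f t * h t) = 0"
      by (rule orth_bounded[OF f z hm, of "real M + 1"]) (auto simp: h_def)
    moreover have "(\<lambda>t. f t * h t) = (\<lambda>t. complex_of_real (if cmod (f t) \<le> real M then (cmod (f t))^2 else 0))"
      by (rule ext) (simp add: h_def mult_cnj_sq)
    ultimately have I: "(LINT t|Mc. (if cmod (f t) \<le> real M then (cmod (f t))^2 else 0)) = 0"
      by simp
    have int: "integrable Mc (\<lambda>t. if cmod (f t) \<le> real M then (cmod (f t))^2 else 0)"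
      by (rule Bochner_Integration.integrable_bound[where f="\<lambda>t. (cmod (f t))^2"])
         (auto simp: L2_int[OF f])
    have "AE t in Mc. (if cmod (f t) \<le> real M then (cmod (f t))^2 else 0) = 0"
      using integral_nonneg_eq_0_iff_AE[OF int] I by simp
    thus ?thesis by eventually_elim (auto split: if_splits)
  qed
  hence "AE t in Mc. \<forall>M::nat. cmod (f t) \<le> real M \<longrightarrow> f t = 0"
    by (subst AE_all_countable) simp
  thus ?thesis
  proof eventually_elim
    case (elim t)
    obtain M :: nat where "cmod (f t) \<le> real M" using real_arch_simple by blast
    thus ?case using elim by blast
  qed
qed



lemma ip_cont:
  assumes g: "\<And>n. L2 (g n)" and G: "L2 G" and h: "L2 h"
    and lim: "(\<lambda>n. nn (\<lambda>t. g n t - G t)) \<longlonglongrightarrow> 0"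
  shows "(\<lambda>n. ip (g n) h) \<longlonglongrightarrow> ip G h"
proof -
  have "(\<lambda>n. ip (g n) h - ip G h) \<longlonglongrightarrow> 0"
  proof (rule Lim_null_comparison)
    show "\<forall>\<^sub>F n in sequentially. norm (ip (g n) h - ip G h) \<le> sqrt (nn (\<lambda>t. g n t - G t)) * sqrt (nn h)"
    proof (intro always_eventually allI)
      fix n
      have "ip (g n) h - ip G h = ip (\<lambda>t. g n t - G t) h" using g G h by (simp add: ip_diff_left)
      thus "norm (ip (g n) h - ip G h) \<le> sqrt (nn (\<lambda>t. g n t - G t)) * sqrt (nn h)"
        using CS_ip'[OF L2_diff[OF g G] h] by simp
    qed
    show "(\<lambda>n. sqrt (nn (\<lambda>t. g n t - G t)) * sqrt (nn h)) \<longlonglongrightarrow> 0"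
      using tendsto_mult[OF tendsto_real_sqrt[OF lim] tendsto_const[of "sqrt (nn h)"]] by simp
  qed
  thus ?thesis by (simp add: LIM_zero_iff)
qed

lemma nn_AE_cong:
  assumes "f \<in> borel_measurable Mc" "g \<in> borel_measurable Mc" "AE t in Mc. f t = g t"
  shows "nn f = nn g"
  unfolding nn_def using assms by (intro integral_cong_AE) auto

lemma tsum_diff:
  assumes "finite B" "A \<subseteq> B"
  shows "(\<lambda>t. tsum B c t - tsum A c t) = tsum (B - A) c"
proof (rule ext)
  fix t
  have "tsum B c t = tsum (B - A) c t + tsum A c t"
    unfolding tsum_def by (rule sum.subset_diff[OF assms(2) assms(1)])
  thus "tsum B c t - tsum A c t = tsum (B - A) c t" by simp
qed

lemma tsum_cauchy:
  assumes mono: "\<And>N M. N \<le> M \<Longrightarrow> A N \<subseteq> A M" and fin: "\<And>N. finite (A N)"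
    and bound: "\<And>N. (\<Sum>k\<in>A N. (cmod (c k))^2) \<le> B"
  shows "\<exists>F. L2 F \<and> (\<lambda>N. nn (\<lambda>t. tsum (A N) c t - F t)) \<longlonglongrightarrow> 0"
proof (rule L2_complete)
  show "L2 (tsum (A N) c)" for N using fin by (rule L2_tsum)
  define s where "s N = (\<Sum>k\<in>A N. (cmod (c k))^2)" for N
  have smono: "incseq s"
    unfolding incseq_def s_def using fin mono by (intro allI impI sum_mono2) auto
  have "Bseq s"
  proof (rule BseqI')
    fix n show "norm (s n) \<le> B" using bound[of n] by (simp add: s_def sum_nonneg)
  qed
  hence "convergent s" using smono by (intro Bseq_monoseq_convergent incseq_imp_monoseq)
  hence "Cauchy s" by (rule convergent_Cauchy)
  have nnd: "nn (\<lambda>t. tsum (A m) c t - tsum (A n) c t) = 2*pi * (s m - s n)" if "n \<le> m" for m n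
  proof -
    have "nn (\<lambda>t. tsum (A m) c t - tsum (A n) c t) = nn (tsum (A m - A n) c)"
      using tsum_diff[OF fin mono[OF that]] by simp
    also have "\<dots> = 2*pi * (\<Sum>k\<in>A m - A n. (cmod (c k))^2)" using fin by (simp add: nn_tsum)
    also have "(\<Sum>k\<in>A m - A n. (cmod (c k))^2) = s m - s n"
      unfolding s_def using sum.subset_diff[OF mono[OF that] fin[of m], of "\<lambda>k. (cmod (c k))^2"] by simp
    finally show ?thesis .
  qed
  fix e :: real assume e: "e > 0"
  obtain N where N: "\<And>m n. m \<ge> N \<Longrightarrow> n \<ge> N \<Longrightarrow> dist (s m) (s n) < e / (2*pi)"
    using \<open>Cauchy s\<close> e unfolding Cauchy_def by (metis divide_pos_pos pi_gt_zero zero_less_numeral mult_pos_pos)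
  show "\<exists>N. \<forall>m\<ge>N. \<forall>n\<ge>N. nn (\<lambda>t. tsum (A m) c t - tsum (A n) c t) < e"
  proof (intro exI allI impI)
    fix m n assume mn: "N \<le> m" "N \<le> n"
    have "nn (\<lambda>t. tsum (A m) c t - tsum (A n) c t) = 2*pi * \<bar>s m - s n\<bar>"
    proof (cases "n \<le> m")
      case True thus ?thesis using nnd[OF True] smono by (simp add: incseq_def)
    next
      case False
      hence mn': "m \<le> n" by simp
      show ?thesis using nnd[OF mn'] smono mn' nn_commute[of "tsum (A m) c"] by (simp add: incseq_def)
    qed
    also have "\<dots> < 2*pi * (e / (2*pi))"
      using mult_strict_left_mono[OF N[OF mn, unfolded dist_real_def], of "2*pi"] by simp
    finally show "nn (\<lambda>t. tsum (A m) c t - tsum (A n) c t) < e" by simp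
  qed
qed

lemma nn_SN_le: "L2 f \<Longrightarrow> (\<Sum>k\<in>{- int N..int N}. (cmod (cf f k))^2) \<le> nn f / (2*pi)"
  using bessel_le[of f N] nn_SN[of f N] by (simp add: field_simps)

lemma parseval:
  assumes f: "L2 f"
  shows "(\<lambda>N. nn (\<lambda>t. f t - SN f N t)) \<longlonglongrightarrow> 0"
proof -
  obtain F where F: "L2 F" "(\<lambda>N. nn (\<lambda>t. tsum {- int N..int N} (cf f) t - F t)) \<longlonglongrightarrow> 0"
    using tsum_cauchy[of "\<lambda>N. {- int N..int N}" "cf f" "nn f / (2*pi)"] nn_SN_le[OF f] by auto
  have lim: "(\<lambda>N. nn (\<lambda>t. SN f N t - F t)) \<longlonglongrightarrow> 0" using F(2) by (simp add: SN_def)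
  have "ip (\<lambda>t. f t - F t) (ex k) = 0" for k
  proof -
    have "(\<lambda>N. ip (SN f N) (ex k)) \<longlonglongrightarrow> ip F (ex k)"
      by (rule ip_cont[OF L2_SN F(1) L2_ex lim])
    moreover have "\<forall>\<^sub>F N in sequentially. ip (SN f N) (ex k) = ip f (ex k)"
      using eventually_ge_at_top[of "nat \<bar>k\<bar>"] by eventually_elim (auto simp: ip_SN_ex)
    hence "(\<lambda>N. ip (SN f N) (ex k)) \<longlonglongrightarrow> ip f (ex k)" by (rule tendsto_eventually)
    ultimately have "ip F (ex k) = ip f (ex k)" using LIMSEQ_unique by blast
    thus ?thesis using f F(1) by (simp add: ip_diff_left L2_ex)
  qed
  hence ae: "AE t in Mc. f t - F t = 0" by (intro fourier_unique L2_diff f F(1))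
  have "nn (\<lambda>t. f t - SN f N t) = nn (\<lambda>t. F t - SN f N t)" for N
    using ae L2_meas[OF f] L2_meas[OF F(1)] L2_meas[OF L2_SN[of f N]]
    by (intro nn_AE_cong) (auto elim: AE_mp)
  thus ?thesis using lim by (simp add: nn_commute[of "SN f _"])
qed



lemma H2_iff: "H2 f \<longleftrightarrow> L2 f \<and> (\<forall>n<0. ip f (ex n) = 0)"
  unfolding H2_def fourier_coeff_ip by simp

lemma H2_L2: "H2 f \<Longrightarrow> L2 f"
  by (simp add: H2_iff)

lemma H2_zero: "H2 (\<lambda>t. 0)"
  unfolding H2_iff by (simp add: L2_zero ip_def)

lemma H2_add: "H2 f \<Longrightarrow> H2 g \<Longrightarrow> H2 (\<lambda>t. f t + g t)"
  unfolding H2_iff by (auto simp: L2_add ip_add_left L2_ex)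

lemma H2_diff: "H2 f \<Longrightarrow> H2 g \<Longrightarrow> H2 (\<lambda>t. f t - g t)"
  unfolding H2_iff by (auto simp: L2_diff ip_diff_left L2_ex)

lemma H2_cmult: "H2 f \<Longrightarrow> H2 (\<lambda>t. c * f t)"
  unfolding H2_iff by (auto simp: L2_cmult ip_cmult_left)

lemma Hinf_H2: "Hinf g \<Longrightarrow> H2 g"
  unfolding Hinf_def by simp

lemma nn_mult_le:
  assumes u: "L2 u" and [measurable]: "b \<in> borel_measurable Mc" and bb: "AE t in Mc. cmod (b t) \<le> C"
  shows "nn (\<lambda>t. b t * u t) \<le> C^2 * nn u"
proof -
  note [measurable] = L2_meas[OF u]
  have "nn (\<lambda>t. b t * u t) \<le> (LINT t|Mc. C^2 * (cmod (u t))^2)"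
    unfolding nn_def
  proof (rule integral_mono_AE)
    show "integrable Mc (\<lambda>t. (cmod (b t * u t))^2)" using L2_int[OF L2_mult_bounded[OF u _ bb]] by simp
    show "integrable Mc (\<lambda>t. C^2 * (cmod (u t))^2)" using L2_int[OF u] by simp
    show "AE t in Mc. (cmod (b t * u t))^2 \<le> C^2 * (cmod (u t))^2"
      using bb
    proof eventually_elim
      case (elim t)
      have "cmod (b t * u t) \<le> C * cmod (u t)" by (simp add: norm_mult elim mult_right_mono)
      hence "(cmod (b t * u t))^2 \<le> (C * cmod (u t))^2" by (simp add: power_mono)
      thus ?case by (simp add: power_mult_distrib)
    qed
  qed
  also have "\<dots> = C^2 * nn u" unfolding nn_def by simp
  finally show ?thesis .
qed

lemma ip_tsum_mult:
  assumes A: "finite A" and g: "L2 g" and gb: "\<And>k. L2 (\<lambda>t. ex k t * g t)"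
  shows "ip (\<lambda>t. tsum A c t * g t) (ex n) = (\<Sum>k\<in>A. c k * ip g (ex (n - k)))"
proof -
  have "(\<lambda>t. tsum A c t * g t) = (\<lambda>t. \<Sum>k\<in>A. c k * (ex k t * g t))"
    unfolding tsum_def by (auto simp: sum_distrib_right mult.assoc)
  hence "ip (\<lambda>t. tsum A c t * g t) (ex n) = (\<Sum>k\<in>A. ip (\<lambda>t. c k * (ex k t * g t)) (ex n))"
    using A gb by (simp add: ip_sum_left L2_cmult L2_ex)
  also have "\<dots> = (\<Sum>k\<in>A. c k * ip g (ex (n - k)))"
  proof (intro sum.cong refl)
    fix k
    have "(\<lambda>t. ex k t * g t * cnj (ex n t)) = (\<lambda>t. g t * cnj (ex (n - k) t))"
    proof (rule ext)
      fix t
      have e: "ex k t * cnj (ex n t) = cnj (ex (n - k) t)" by (simp add: cnj_ex ex_mult)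
      have "ex k t * g t * cnj (ex n t) = g t * (ex k t * cnj (ex n t))" by (simp add: algebra_simps)
      thus "ex k t * g t * cnj (ex n t) = g t * cnj (ex (n - k) t)" by (simp only: e)
    qed
    hence "ip (\<lambda>t. ex k t * g t) (ex n) = ip g (ex (n - k))" unfolding ip_def by simp
    thus "ip (\<lambda>t. c k * (ex k t * g t)) (ex n) = c k * ip g (ex (n - k))" by (simp add: ip_cmult_left)
  qed
  finally show ?thesis .
qed

lemma ex_mult_ex: "ex j t * ex k t = ex (j + k) t" by (rule ex_mult)

lemma H2_mult_Hinf:
  assumes f: "H2 f" and g: "Hinf g"
  shows "H2 (\<lambda>t. f t * g t)"
proof -
  obtain C where C: "AE t in Mc. cmod (g t) \<le> C" using g unfolding Hinf_def by blast
  have gH: "H2 g" using g by (rule Hinf_H2)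
  note [measurable] = L2_meas[OF H2_L2[OF f]] L2_meas[OF H2_L2[OF gH]]
  have Lf: "L2 f" using f by (rule H2_L2)
  have Lfg: "L2 (\<lambda>t. f t * g t)"
    using L2_mult_bounded[OF Lf _ C] by (simp add: mult.commute)
  have Lg: "L2 (\<lambda>t. ex k t * g t)" for k
    using L2_mult_bounded[OF L2_ex _ C, of k] by (simp add: mult.commute)
  have "ip (\<lambda>t. f t * g t) (ex n) = 0" if n: "n < 0" for n
  proof -
    have z: "ip (\<lambda>t. SN f N t * g t) (ex n) = 0" for N
    proof -
      have "ip (\<lambda>t. SN f N t * g t) (ex n) = (\<Sum>k\<in>{- int N..int N}. cf f k * ip g (ex (n - k)))"
        unfolding SN_def using H2_L2[OF gH] Lg by (intro ip_tsum_mult) auto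
      also have "\<dots> = 0"
      proof (intro sum.neutral ballI)
        fix k assume "k \<in> {- int N..int N}"
        show "cf f k * ip g (ex (n - k)) = 0"
        proof (cases "k < 0")
          case True thus ?thesis using f by (simp add: H2_iff cf_def)
        next
          case False thus ?thesis using gH n by (simp add: H2_iff)
        qed
      qed
      finally show ?thesis .
    qed
    have LSg: "L2 (\<lambda>t. SN f N t * g t)" for N
      using L2_mult_bounded[OF L2_SN _ C, of f N] by (simp add: mult.commute)
    have "(\<lambda>N. ip (\<lambda>t. SN f N t * g t) (ex n)) \<longlonglongrightarrow> ip (\<lambda>t. f t * g t) (ex n)"
    proof (rule ip_cont[OF LSg Lfg L2_ex])
      show "(\<lambda>N. nn (\<lambda>t. SN f N t * g t - f t * g t)) \<longlonglongrightarrow> 0"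
      proof (rule Lim_null_comparison)
        show "\<forall>\<^sub>F N in sequentially. norm (nn (\<lambda>t. SN f N t * g t - f t * g t)) \<le> C^2 * nn (\<lambda>t. f t - SN f N t)"
        proof (intro always_eventually allI)
          fix N
          have "nn (\<lambda>t. SN f N t * g t - f t * g t) = nn (\<lambda>t. g t * (SN f N t - f t))"
            by (simp add: algebra_simps)
          also have "\<dots> \<le> C^2 * nn (\<lambda>t. SN f N t - f t)"
            by (rule nn_mult_le[OF L2_diff[OF L2_SN Lf] _ C]) simp
          finally show "norm (nn (\<lambda>t. SN f N t * g t - f t * g t)) \<le> C^2 * nn (\<lambda>t. f t - SN f N t)"
            using nn_nonneg by (simp add: nn_commute[of "SN f N"])
        qed
        show "(\<lambda>N. C^2 * nn (\<lambda>t. f t - SN f N t)) \<longlonglongrightarrow> 0"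
          using tendsto_mult[OF tendsto_const parseval[OF Lf]] by simp
      qed
    qed
    thus ?thesis using z by (simp add: LIMSEQ_const_iff)
  qed
  thus ?thesis using Lfg by (simp add: H2_iff)
qed

lemma ex_Hinf: "k \<ge> 0 \<Longrightarrow> Hinf (ex k)"
  unfolding Hinf_def H2_iff by (auto simp: L2_ex ip_ex intro!: exI[of _ 1])

lemma proj_exists:
  assumes f: "L2 f"
  shows "\<exists>h. H2 h \<and> (\<forall>g. H2 g \<longrightarrow> ip (\<lambda>t. f t - h t) g = 0)"
proof -
  define Q where "Q N = tsum {0..int N} (cf f)" for N
  define R where "R N = tsum {- int N..-1} (cf f)" for N
  have bnd: "(\<Sum>k\<in>{0..int N}. (cmod (cf f k))^2) \<le> nn f / (2*pi)" for N
    using nn_SN_le[OF f, of N] sum_mono2[of "{- int N..int N}" "{0..int N}" "\<lambda>k. (cmod (cf f k))^2"] by auto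
  obtain h where h: "L2 h" "(\<lambda>N. nn (\<lambda>t. Q N t - h t)) \<longlonglongrightarrow> 0"
    using tsum_cauchy[of "\<lambda>N. {0..int N}" "cf f" "nn f / (2*pi)"] bnd unfolding Q_def by auto
  have LQ: "L2 (Q N)" for N unfolding Q_def by (simp add: L2_tsum)
  have LR: "L2 (R N)" for N unfolding R_def by (simp add: L2_tsum)
  have H2h: "H2 h"
    unfolding H2_iff
  proof (intro conjI allI impI h(1))
    fix n :: int assume n: "n < 0"
    have "(\<lambda>N. ip (Q N) (ex n)) \<longlonglongrightarrow> ip h (ex n)" by (rule ip_cont[OF LQ h(1) L2_ex h(2)])
    moreover have "ip (Q N) (ex n) = 0" for N unfolding Q_def using n by (simp add: ip_tsum_ex)
    ultimately show "ip h (ex n) = 0" by (simp add: LIMSEQ_const_iff)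
  qed
  have SQR: "SN f N t = R N t + Q N t" for N t
  proof -
    have "{- int N..int N} = {- int N..-1} \<union> {0..int N}" by auto
    moreover have "{- int N..-1} \<inter> {0..int N} = {}" by auto
    ultimately show ?thesis unfolding SN_def R_def Q_def tsum_def
      by (simp add: sum.union_disjoint)
  qed
  have Lfh: "L2 (\<lambda>t. f t - h t)" using f h(1) by (rule L2_diff)
  have Rlim: "(\<lambda>N. nn (\<lambda>t. R N t - (f t - h t))) \<longlonglongrightarrow> 0"
  proof (rule Lim_null_comparison)
    show "\<forall>\<^sub>F N in sequentially. norm (nn (\<lambda>t. R N t - (f t - h t))) \<le>
          (sqrt (nn (\<lambda>t. SN f N t - f t)) + sqrt (nn (\<lambda>t. h t - Q N t)))^2"
    proof (intro always_eventually allI)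
      fix N
      have eq: "(\<lambda>t. R N t - (f t - h t)) = (\<lambda>t. (SN f N t - f t) + (h t - Q N t))"
        by (rule ext) (simp add: SQR algebra_simps)
      have "sqrt (nn (\<lambda>t. R N t - (f t - h t))) \<le> sqrt (nn (\<lambda>t. SN f N t - f t)) + sqrt (nn (\<lambda>t. h t - Q N t))"
        unfolding eq by (intro nn_triangle L2_diff L2_SN f h(1) LQ)
      hence "(sqrt (nn (\<lambda>t. R N t - (f t - h t))))^2 \<le> (sqrt (nn (\<lambda>t. SN f N t - f t)) + sqrt (nn (\<lambda>t. h t - Q N t)))^2"
        by (intro power_mono) (auto simp: nn_nonneg)
      thus "norm (nn (\<lambda>t. R N t - (f t - h t))) \<le> (sqrt (nn (\<lambda>t. SN f N t - f t)) + sqrt (nn (\<lambda>t. h t - Q N t)))^2"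
        using nn_nonneg by simp
    qed
    have a: "(\<lambda>N. sqrt (nn (\<lambda>t. SN f N t - f t))) \<longlonglongrightarrow> 0"
      using tendsto_real_sqrt[OF parseval[OF f]] by (simp add: nn_commute[of f])
    have b: "(\<lambda>N. sqrt (nn (\<lambda>t. h t - Q N t))) \<longlonglongrightarrow> 0"
      using tendsto_real_sqrt[OF h(2)] by (simp add: nn_commute[of "Q _"])
    show "(\<lambda>N. (sqrt (nn (\<lambda>t. SN f N t - f t)) + sqrt (nn (\<lambda>t. h t - Q N t)))^2) \<longlonglongrightarrow> 0"
      using tendsto_power[OF tendsto_add[OF a b], of 2] by simp
  qed
  have "ip (\<lambda>t. f t - h t) g = 0" if g: "H2 g" for g
  proof -
    have "(\<lambda>N. ip (R N) g) \<longlonglongrightarrow> ip (\<lambda>t. f t - h t) g"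
      by (rule ip_cont[OF LR Lfh H2_L2[OF g] Rlim])
    moreover have "ip (R N) g = 0" for N
    proof -
      have "ip (R N) g = (\<Sum>k\<in>{- int N..-1}. cf f k * ip (ex k) g)"
        unfolding R_def using H2_L2[OF g] by (simp add: ip_tsum_left)
      also have "\<dots> = 0"
      proof (intro sum.neutral ballI)
        fix k assume "k \<in> {- int N..-1}"
        hence "ip g (ex k) = 0" using g by (simp add: H2_iff)
        thus "cf f k * ip (ex k) g = 0" by (simp add: ip_swap[of "ex k"])
      qed
      finally show ?thesis .
    qed
    ultimately show ?thesis by (simp add: LIMSEQ_const_iff)
  qed
  thus ?thesis using H2h by blast
qed

lemma l2inner_zero_iff: "l2inner f g = 0 \<longleftrightarrow> ip f g = 0"
  by (simp add: l2inner_ip)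

lemma Pproj_spec:
  assumes f: "L2 f"
  shows "H2 (Pproj f)" "\<And>g. H2 g \<Longrightarrow> ip (\<lambda>t. f t - Pproj f t) g = 0"
proof -
  have "\<exists>h. H2 h \<and> (\<forall>g. H2 g \<longrightarrow> l2inner (\<lambda>t. f t - h t) g = 0)"
    using proj_exists[OF f] by (simp add: l2inner_zero_iff)
  hence "H2 (Pproj f) \<and> (\<forall>g. H2 g \<longrightarrow> l2inner (\<lambda>t. f t - Pproj f t) g = 0)"
    unfolding Pproj_def by (rule someI_ex)
  thus "H2 (Pproj f)" "\<And>g. H2 g \<Longrightarrow> ip (\<lambda>t. f t - Pproj f t) g = 0"
    by (auto simp: l2inner_zero_iff)
qed

lemma Pproj_AE:
  assumes f: "L2 f" and h: "H2 h" and o: "\<And>g. H2 g \<Longrightarrow> ip (\<lambda>t. f t - h t) g = 0"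
  shows "AE t in Mc. Pproj f t = h t"
proof -
  define w where "w t = Pproj f t - h t" for t
  have Hw: "H2 w" unfolding w_def by (intro H2_diff Pproj_spec f h)
  have LP: "L2 (Pproj f)" by (rule H2_L2[OF Pproj_spec(1)[OF f]])
  have Lh: "L2 h" by (rule H2_L2[OF h])
  have "ip w w = ip (\<lambda>t. f t - h t) w - ip (\<lambda>t. f t - Pproj f t) w"
  proof -
    have "w = (\<lambda>t. (f t - h t) - (f t - Pproj f t))" by (auto simp: w_def)
    hence "ip w w = ip (\<lambda>t. (f t - h t) - (f t - Pproj f t)) w" by simp
    also have "\<dots> = ip (\<lambda>t. f t - h t) w - ip (\<lambda>t. f t - Pproj f t) w"
      using f LP Lh H2_L2[OF Hw] by (intro ip_diff_left L2_diff)
    finally show ?thesis .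
  qed
  also have "\<dots> = 0" using o[OF Hw] Pproj_spec(2)[OF f Hw] by simp
  finally have "nn w = 0" using nn_ip[of w] by simp
  hence "AE t in Mc. w t = 0" using H2_L2[OF Hw] by (intro nn_zero_AE)
  thus ?thesis by eventually_elim (simp add: w_def)
qed



lemma inner_facts:
  assumes "inner_fun \<theta>"
  shows "Hinf \<theta>" "\<theta> \<in> borel_measurable Mc" "AE t in Mc. cmod (\<theta> t) = 1"
    "AE t in Mc. cmod (\<theta> t) \<le> 1" "AE t in Mc. cmod (cnj (\<theta> t)) \<le> 1"
proof -
  show H: "Hinf \<theta>" using assms by (simp add: inner_fun_def)
  show "\<theta> \<in> borel_measurable Mc" using L2_meas[OF H2_L2[OF Hinf_H2[OF H]]] .
  show u: "AE t in Mc. cmod (\<theta> t) = 1" using assms by (simp add: inner_fun_def)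
  show "AE t in Mc. cmod (\<theta> t) \<le> 1" using u by eventually_elim simp
  show "AE t in Mc. cmod (cnj (\<theta> t)) \<le> 1" using u by eventually_elim simp
qed

lemma key_lemma:
  assumes th: "inner_fun \<theta>" and a: "H2 a" and c: "L2 c"
    and co: "\<And>g. H2 g \<Longrightarrow> ip c (\<lambda>t. \<theta> t * g t) = 0"
  shows "nn (Ptheta \<theta> (\<lambda>t. a t + c t)) = nn (Pperp (\<lambda>t. cnj (\<theta> t) * a t)) + nn (Pproj c) + 2 * Re (ip a c)"
proof -
  note thf = inner_facts[OF th]
  note [measurable] = thf(2)
  have La: "L2 a" using a by (rule H2_L2)
  note [measurable] = L2_meas[OF La] L2_meas[OF c]
  define w where "w = Pproj (\<lambda>t. cnj (\<theta> t) * a t)"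
  have Lta: "L2 (\<lambda>t. cnj (\<theta> t) * a t)" by (rule L2_mult_bounded[OF La _ thf(5)]) simp
  have Ltc: "L2 (\<lambda>t. cnj (\<theta> t) * c t)" by (rule L2_mult_bounded[OF c _ thf(5)]) simp
  have Lac: "L2 (\<lambda>t. a t + c t)" using La c by (rule L2_add)
  have Hw: "H2 w" unfolding w_def by (rule Pproj_spec(1)[OF Lta])
  have Lw: "L2 w" using Hw by (rule H2_L2)
  have HPc: "H2 (Pproj c)" by (rule Pproj_spec(1)[OF c])
  have LPc: "L2 (Pproj c)" using HPc by (rule H2_L2)
  note [measurable] = L2_meas[OF Lw] L2_meas[OF LPc]
  have Hthw: "H2 (\<lambda>t. \<theta> t * w t)"
    using H2_mult_Hinf[OF Hw thf(1)] by (simp add: mult.commute)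
  have Lthw: "L2 (\<lambda>t. \<theta> t * w t)" using Hthw by (rule H2_L2)
  have AE1: "AE t in Mc. Pproj (\<lambda>t. a t + c t) t = a t + Pproj c t"
  proof (rule Pproj_AE[OF Lac])
    show "H2 (\<lambda>t. a t + Pproj c t)" using a HPc by (rule H2_add)
    fix g assume g: "H2 g"
    have "(\<lambda>t. a t + c t - (a t + Pproj c t)) = (\<lambda>t. c t - Pproj c t)" by auto
    thus "ip (\<lambda>t. a t + c t - (a t + Pproj c t)) g = 0" using Pproj_spec(2)[OF c g] by simp
  qed
  have AE2: "AE t in Mc. Pproj (\<lambda>s. cnj (\<theta> s) * (a s + c s)) t = w t"
  proof (rule Pproj_AE[OF _ Hw])
    show "L2 (\<lambda>s. cnj (\<theta> s) * (a s + c s))" by (rule L2_mult_bounded[OF Lac _ thf(5)]) simp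
    fix g assume g: "H2 g"
    have Lg: "L2 g" using g by (rule H2_L2)
    have "(\<lambda>t. cnj (\<theta> t) * (a t + c t) - w t) = (\<lambda>t. (cnj (\<theta> t) * a t - w t) + cnj (\<theta> t) * c t)"
      by (auto simp: algebra_simps)
    hence "ip (\<lambda>t. cnj (\<theta> t) * (a t + c t) - w t) g = ip (\<lambda>t. cnj (\<theta> t) * a t - w t) g + ip (\<lambda>t. cnj (\<theta> t) * c t) g"
      using Lta Lw Ltc Lg by (simp add: ip_add_left L2_diff)
    also have "ip (\<lambda>t. cnj (\<theta> t) * a t - w t) g = 0" unfolding w_def by (rule Pproj_spec(2)[OF Lta g])
    also have "ip (\<lambda>t. cnj (\<theta> t) * c t) g = ip c (\<lambda>t. \<theta> t * g t)"
      unfolding ip_def by (simp add: mult.commute mult.left_commute)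
    also have "\<dots> = 0" by (rule co[OF g])
    finally show "ip (\<lambda>t. cnj (\<theta> t) * (a t + c t) - w t) g = 0" by simp
  qed
  define X where "X t = a t - \<theta> t * w t" for t
  have LX: "L2 X" unfolding X_def using La Lthw by (rule L2_diff)
  have "nn (Ptheta \<theta> (\<lambda>t. a t + c t)) = nn (\<lambda>t. X t + Pproj c t)"
  proof (rule nn_AE_cong)
    show "Ptheta \<theta> (\<lambda>t. a t + c t) \<in> borel_measurable Mc"
      unfolding Ptheta_def
      using L2_meas[OF H2_L2[OF Pproj_spec(1)[OF Lac]]]
            L2_meas[OF H2_L2[OF Pproj_spec(1)[OF L2_mult_bounded[OF Lac _ thf(5)]]]]
      by simp
    show "(\<lambda>t. X t + Pproj c t) \<in> borel_measurable Mc" unfolding X_def by simp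
    show "AE t in Mc. Ptheta \<theta> (\<lambda>t. a t + c t) t = X t + Pproj c t"
      using AE1 AE2 by eventually_elim (simp add: Ptheta_def X_def)
  qed
  also have "\<dots> = nn X + nn (Pproj c) + 2 * Re (ip X (Pproj c))"
    using LX LPc by (rule nn_add)
  also have "ip X (Pproj c) = ip a c"
  proof -
    have "ip X (Pproj c) = ip a (Pproj c) - ip (\<lambda>t. \<theta> t * w t) (Pproj c)"
      unfolding X_def using La Lthw LPc by (rule ip_diff_left)
    also have "ip (\<lambda>t. \<theta> t * w t) (Pproj c) = 0"
    proof -
      have "ip (Pproj c) (\<lambda>t. \<theta> t * w t) = ip c (\<lambda>t. \<theta> t * w t) - ip (\<lambda>t. c t - Pproj c t) (\<lambda>t. \<theta> t * w t)"
        using c LPc Lthw by (simp add: ip_diff_left)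
      also have "\<dots> = 0" using co[OF Hw] Pproj_spec(2)[OF c Hthw] by simp
      finally show ?thesis by (subst ip_swap) simp
    qed
    also have "ip a (Pproj c) = ip a c"
    proof -
      have "ip a (\<lambda>t. c t - Pproj c t) = 0"
        using Pproj_spec(2)[OF c a] by (subst ip_swap) simp
      thus ?thesis using La c LPc by (simp add: ip_diff_right)
    qed
    finally show ?thesis by simp
  qed
  also have "nn X = nn (Pperp (\<lambda>t. cnj (\<theta> t) * a t))"
  proof -
    have "nn X = nn (\<lambda>t. cnj (\<theta> t) * a t - w t)"
      unfolding nn_def
    proof (rule integral_cong_AE)
      show "(\<lambda>t. (cmod (X t))^2) \<in> borel_measurable Mc" using L2_meas[OF LX] by simp
      show "(\<lambda>t. (cmod (cnj (\<theta> t) * a t - w t))^2) \<in> borel_measurable Mc" by simp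
      show "AE t in Mc. (cmod (X t))^2 = (cmod (cnj (\<theta> t) * a t - w t))^2"
        using thf(3)
      proof eventually_elim
        case (elim t)
        have tt: "\<theta> t * cnj (\<theta> t) = 1"
          using elim complex_norm_square[of "\<theta> t"] by simp
        have "\<theta> t * (cnj (\<theta> t) * a t - w t) = (\<theta> t * cnj (\<theta> t)) * a t - \<theta> t * w t"
          by (simp only: right_diff_distrib mult.assoc)
        also have "\<dots> = X t" unfolding X_def tt by simp
        finally have "X t = \<theta> t * (cnj (\<theta> t) * a t - w t)" by simp
        hence "cmod (X t) = cmod (cnj (\<theta> t) * a t - w t)" using elim by (simp add: norm_mult)
        thus ?case by simp
      qed
    qed
    thus ?thesis unfolding Pperp_def w_def by simp
  qed
  finally show ?thesis .
qed

lemma Kspace_ip: "Kspace \<theta> f \<Longrightarrow> H2 g \<Longrightarrow> ip f (\<lambda>t. \<theta> t * g t) = 0"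
  unfolding Kspace_def by (simp add: l2inner_zero_iff)

lemma orth_Ktheta:
  assumes th: "inner_fun \<theta>" and phi: "Kspace \<theta> \<phi>" and u: "Kspace \<theta> u" and uH: "Hinf u"
    and g: "H2 g"
  shows "ip (\<lambda>t. cnj (\<phi> t) * u t) (\<lambda>t. \<theta> t * g t) = 0"
proof -
  note thf = inner_facts[OF th]
  note [measurable] = thf(2)
  have Hphi: "H2 \<phi>" using phi by (simp add: Kspace_def)
  have Lphi: "L2 \<phi>" using Hphi by (rule H2_L2)
  have Lu: "L2 u" using uH by (intro H2_L2 Hinf_H2)
  obtain C where C: "AE t in Mc. cmod (u t) \<le> C" using uH unfolding Hinf_def by blast
  note [measurable] = L2_meas[OF Lu] L2_meas[OF Lphi]
  define c where "c t = cnj (\<phi> t) * u t" for t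
  have Lc: "L2 c" unfolding c_def using L2_mult_bounded[OF L2_cnj[OF Lphi] _ C] by (simp add: mult.commute)
  have Lg: "L2 g" using g by (rule H2_L2)
  have Lth: "L2 (\<lambda>t. \<theta> t * h t)" if "L2 h" for h by (rule L2_mult_bounded[OF that _ thf(4)]) simp
  have ck: "ip c (\<lambda>t. \<theta> t * ex k t) = 0" if k: "k \<ge> 0" for k
  proof -
    have "ip c (\<lambda>t. \<theta> t * ex k t) = ip u (\<lambda>t. \<theta> t * (\<phi> t * ex k t))"
      unfolding ip_def c_def by (simp add: mult.commute mult.left_commute)
    also have "\<dots> = 0" by (rule Kspace_ip[OF u H2_mult_Hinf[OF Hphi ex_Hinf[OF k]]])
    finally show ?thesis .
  qed
  have cN: "ip c (\<lambda>t. \<theta> t * SN g N t) = 0" for N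
  proof -
    have "(\<lambda>t. \<theta> t * SN g N t) = (\<lambda>t. \<Sum>k\<in>{- int N..int N}. cf g k * (\<theta> t * ex k t))"
      unfolding SN_def tsum_def by (auto simp: sum_distrib_left mult.left_commute)
    hence "ip c (\<lambda>t. \<theta> t * SN g N t) = (\<Sum>k\<in>{- int N..int N}. ip c (\<lambda>t. cf g k * (\<theta> t * ex k t)))"
      using Lc Lth[OF L2_ex] by (simp add: ip_sum_right L2_cmult)
    also have "\<dots> = 0"
    proof (intro sum.neutral ballI)
      fix k assume "k \<in> {- int N..int N}"
      show "ip c (\<lambda>t. cf g k * (\<theta> t * ex k t)) = 0"
      proof (cases "k < 0")
        case True thus ?thesis using g by (simp add: H2_iff cf_def ip_cmult_right ip_def)
      next
        case False thus ?thesis using ck[of k] by (simp add: ip_cmult_right)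
      qed
    qed
    finally show ?thesis .
  qed
  have "(\<lambda>N. ip (\<lambda>t. \<theta> t * SN g N t) c) \<longlonglongrightarrow> ip (\<lambda>t. \<theta> t * g t) c"
  proof (rule ip_cont[OF Lth[OF L2_SN] Lth[OF Lg] Lc])
    show "(\<lambda>N. nn (\<lambda>t. \<theta> t * SN g N t - \<theta> t * g t)) \<longlonglongrightarrow> 0"
    proof (rule Lim_null_comparison)
      show "\<forall>\<^sub>F N in sequentially. norm (nn (\<lambda>t. \<theta> t * SN g N t - \<theta> t * g t)) \<le> 1^2 * nn (\<lambda>t. g t - SN g N t)"
      proof (intro always_eventually allI)
        fix N
        have "nn (\<lambda>t. \<theta> t * SN g N t - \<theta> t * g t) = nn (\<lambda>t. \<theta> t * (SN g N t - g t))"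
          by (simp add: algebra_simps)
        also have "\<dots> \<le> 1^2 * nn (\<lambda>t. SN g N t - g t)"
          by (rule nn_mult_le[OF L2_diff[OF L2_SN Lg] _ thf(4)]) simp
        finally show "norm (nn (\<lambda>t. \<theta> t * SN g N t - \<theta> t * g t)) \<le> 1^2 * nn (\<lambda>t. g t - SN g N t)"
          using nn_nonneg by (simp add: nn_commute[of "SN g N"])
      qed
      show "(\<lambda>N. 1^2 * nn (\<lambda>t. g t - SN g N t)) \<longlonglongrightarrow> 0"
        using parseval[OF Lg] by simp
    qed
  qed
  moreover have "ip (\<lambda>t. \<theta> t * SN g N t) c = 0" for N
    using cN[of N] by (subst ip_swap) simp
  ultimately have "ip (\<lambda>t. \<theta> t * g t) c = 0" by (simp add: LIMSEQ_const_iff)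
  hence "ip c (\<lambda>t. \<theta> t * g t) = 0" by (subst ip_swap) simp
  moreover have "(\<lambda>t. cnj (\<phi> t) * u t) = c" by (rule ext) (simp add: c_def)
  ultimately show ?thesis by simp
qed

theorem lemma2p1:
  fixes \<theta> \<phi>1 \<phi>2 u :: "real \<Rightarrow> complex"
  assumes "inner_fun \<theta>" and "nonconstant \<theta>"
    and "Kspace \<theta> \<phi>1" and "Kspace \<theta> \<phi>2"
    and "Kspace \<theta> u" and "Hinf u"
  shows "(l2norm (TTO \<theta> (\<lambda>t. \<phi>1 t + cnj (\<phi>2 t)) u))^2
         - (l2norm (TTO \<theta> (\<lambda>t. cnj (\<phi>1 t + cnj (\<phi>2 t))) u))^2
       = (l2norm (Pperp (\<lambda>t. cnj (\<theta> t) * \<phi>1 t * u t)))^2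
         - (l2norm (Pproj (\<lambda>t. cnj (\<phi>1 t) * u t)))^2
         - ((l2norm (Pperp (\<lambda>t. cnj (\<theta> t) * \<phi>2 t * u t)))^2
            - (l2norm (Pproj (\<lambda>t. cnj (\<phi>2 t) * u t)))^2)"
proof -
  note th = assms(1)
  have H1: "H2 \<phi>1" using assms(3) by (simp add: Kspace_def)
  have H2': "H2 \<phi>2" using assms(4) by (simp add: Kspace_def)
  have Lu: "L2 u" using assms(6) by (intro H2_L2 Hinf_H2)
  obtain C where C: "AE t in Mc. cmod (u t) \<le> C" using assms(6) unfolding Hinf_def by blast
  note [measurable] = L2_meas[OF Lu]
  define a where "a t = \<phi>1 t * u t" for t
  define b where "b t = \<phi>2 t * u t" for t
  define c1 where "c1 t = cnj (\<phi>1 t) * u t" for t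
  define c2 where "c2 t = cnj (\<phi>2 t) * u t" for t
  have Ha: "H2 a" unfolding a_def by (rule H2_mult_Hinf[OF H1 assms(6)])
  have Hb: "H2 b" unfolding b_def by (rule H2_mult_Hinf[OF H2' assms(6)])
  have Lc1: "L2 c1" unfolding c1_def
    using L2_mult_bounded[OF L2_cnj[OF H2_L2[OF H1]] _ C] by (simp add: mult.commute)
  have Lc2: "L2 c2" unfolding c2_def
    using L2_mult_bounded[OF L2_cnj[OF H2_L2[OF H2']] _ C] by (simp add: mult.commute)
  have o1: "\<And>g. H2 g \<Longrightarrow> ip c1 (\<lambda>t. \<theta> t * g t) = 0"
    unfolding c1_def by (rule orth_Ktheta[OF th assms(3) assms(5) assms(6)])
  have o2: "\<And>g. H2 g \<Longrightarrow> ip c2 (\<lambda>t. \<theta> t * g t) = 0"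
    unfolding c2_def by (rule orth_Ktheta[OF th assms(4) assms(5) assms(6)])
  have T1: "TTO \<theta> (\<lambda>t. \<phi>1 t + cnj (\<phi>2 t)) u = Ptheta \<theta> (\<lambda>t. a t + c2 t)"
    unfolding TTO_def a_def c2_def by (simp add: distrib_right)
  have T2: "TTO \<theta> (\<lambda>t. cnj (\<phi>1 t + cnj (\<phi>2 t))) u = Ptheta \<theta> (\<lambda>t. b t + c1 t)"
    unfolding TTO_def b_def c1_def by (simp add: distrib_right add.commute)
  have P1: "(\<lambda>t. cnj (\<theta> t) * \<phi>1 t * u t) = (\<lambda>t. cnj (\<theta> t) * a t)"
    unfolding a_def by (simp add: mult.assoc)
  have P2: "(\<lambda>t. cnj (\<theta> t) * \<phi>2 t * u t) = (\<lambda>t. cnj (\<theta> t) * b t)"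
    unfolding b_def by (simp add: mult.assoc)
  have R: "ip a c2 = ip b c1"
    unfolding ip_def a_def b_def c1_def c2_def by (simp add: mult.commute mult.left_commute)
  have e1: "nn (Ptheta \<theta> (\<lambda>t. a t + c2 t)) = nn (Pperp (\<lambda>t. cnj (\<theta> t) * a t)) + nn (Pproj c2) + 2 * Re (ip a c2)"
    by (rule key_lemma[OF th Ha Lc2 o2])
  have e2: "nn (Ptheta \<theta> (\<lambda>t. b t + c1 t)) = nn (Pperp (\<lambda>t. cnj (\<theta> t) * b t)) + nn (Pproj c1) + 2 * Re (ip b c1)"
    by (rule key_lemma[OF th Hb Lc1 o1])
  have c1e: "(\<lambda>t. cnj (\<phi>1 t) * u t) = c1" by (rule ext) (simp add: c1_def)
  have c2e: "(\<lambda>t. cnj (\<phi>2 t) * u t) = c2" by (rule ext) (simp add: c2_def)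
  show ?thesis
    unfolding T1 T2 P1 P2 c1e c2e l2norm_sq e1 e2 R
    by (simp add: field_simps)
qed


end
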